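(* For every $n>0$, the logics $L_{\mathrm{RCC5}}(\mathcal{RS}^5)=L^{\mathrm S}_{\mathrm{RCC5}}(\mathcal{TOP})=L^{\mathrm S}_{\mathrm{RCC5}}(\mathbb R^n,\mathbb R^n_{\mathrm{reg}})$ are recursively enumerable.
   Context: Topology: interior $\mathbb I$, closure $\mathbb C$; regular closed: $\mathbb C\mathbb I(s)=s$; $\mathfrak T_{\mathrm{reg}}$: non-empty regular closed subsets; $\mathbb R^n$ Euclidean. $\mathfrak R^5(\mathfrak T,U)$: domain $U$ with $\mathrm{eq}$ ($s=t$), $\mathrm{po}$ ($\mathbb Is\cap\mathbb It\ne\emptyset$, neither contained in the other), $\mathrm{dr}$ ($\mathbb Is\cap\mathbb It=\emptyset$), $\mathrm{pp}$ ($s\subseteq t$, $s\neq t$), $\mathrm{ppi}$ (inverse). $\mathcal{TOP}$: all $\mathfrak R^5(\mathfrak T,\mathfrak T_{\mathrm{reg}})$. $\mathcal{RS}^5$: all general RCC5-structures (non-empty $W$ with five mutually disjoint jointly exhaustive relations, $\mathrm{eq}$ identity, $\mathrm{po},\mathrm{dr}$ symmetric, $\mathrm{pp}$ inverse of $\mathrm{ppi}$, satisfying the standard RCC5 composition table). $\mathcal L_{\mathrm{RCC5}}$: modal language with a box per RCC5 relation. $L_{\mathrm{RCC5}}(\mathcal S)$: formulas valid in all models on members of $\mathcal S$; $L^{\mathrm S}_{\mathrm{RCC5}}(\mathcal S)$: formulas valid in all substructures of members of $\mathcal S$. *)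

theory Defs
  imports "HOL-Analysis.Analysis" "HOL-Library.Nat_Bijection"
begin

datatype rel5 = EQ | PO | DR | PP | PPI

datatype fm = Atom nat | Neg fm | Conj fm fm | Box rel5 fm

fun sat :: "'w set \<Rightarrow> (rel5 \<Rightarrow> 'w \<Rightarrow> 'w \<Rightarrow> bool) \<Rightarrow> (nat \<Rightarrow> 'w set) \<Rightarrow> 'w \<Rightarrow> fm \<Rightarrow> bool" where
  "sat W R V w (Atom p) = (w \<in> V p)"
| "sat W R V w (Neg \<phi>) = (\<not> sat W R V w \<phi>)"
| "sat W R V w (Conj \<phi> \<psi>) = (sat W R V w \<phi> \<and> sat W R V w \<psi>)"
| "sat W R V w (Box r \<phi>) = (\<forall>v\<in>W. R r w v \<longrightarrow> sat W R V v \<phi>)"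

definition valid_frame :: "'w set \<Rightarrow> (rel5 \<Rightarrow> 'w \<Rightarrow> 'w \<Rightarrow> bool) \<Rightarrow> fm \<Rightarrow> bool" where
  "valid_frame W R \<phi> \<longleftrightarrow> (\<forall>V. \<forall>w\<in>W. sat W R V w \<phi>)"

text \<open>Standard RCC5 (weak) composition table: comp r s is the set of relations
  that may hold between x and z when r x y and s y z.\<close>
fun comp5 :: "rel5 \<Rightarrow> rel5 \<Rightarrow> rel5 set" where
  "comp5 EQ s = {s}"
| "comp5 r EQ = {r}"
| "comp5 DR DR = UNIV"
| "comp5 DR PO = {DR, PO, PP}"
| "comp5 DR PP = {DR, PO, PP}"
| "comp5 DR PPI = {DR}"
| "comp5 PO DR = {DR, PO, PPI}"
| "comp5 PO PO = UNIV"
| "comp5 PO PP = {PO, PP}"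
| "comp5 PO PPI = {DR, PO, PPI}"
| "comp5 PP DR = {DR}"
| "comp5 PP PO = {DR, PO, PP}"
| "comp5 PP PP = {PP}"
| "comp5 PP PPI = UNIV"
| "comp5 PPI DR = {DR, PO, PPI}"
| "comp5 PPI PO = {PO, PPI}"
| "comp5 PPI PP = {EQ, PO, PP, PPI}"
| "comp5 PPI PPI = {PPI}"

definition rcc5_struct :: "'w set \<Rightarrow> (rel5 \<Rightarrow> 'w \<Rightarrow> 'w \<Rightarrow> bool) \<Rightarrow> bool" where
  "rcc5_struct W R \<longleftrightarrow>
     W \<noteq> {}
   \<and> (\<forall>x\<in>W. \<forall>y\<in>W. \<exists>!r. R r x y)
   \<and> (\<forall>x\<in>W. \<forall>y\<in>W. R EQ x y \<longleftrightarrow> x = y)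
   \<and> (\<forall>x\<in>W. \<forall>y\<in>W. R PO x y \<longleftrightarrow> R PO y x)
   \<and> (\<forall>x\<in>W. \<forall>y\<in>W. R DR x y \<longleftrightarrow> R DR y x)
   \<and> (\<forall>x\<in>W. \<forall>y\<in>W. R PP x y \<longleftrightarrow> R PPI y x)
   \<and> (\<forall>x\<in>W. \<forall>y\<in>W. \<forall>z\<in>W. \<forall>r s. R r x y \<longrightarrow> R s y z \<longrightarrow> (\<exists>t\<in>comp5 r s. R t x z))"

text \<open>L_RCC5 of the class of general RCC5-structures whose carrier lives in type 'w.\<close>
definition RS5_logic :: "'w itself \<Rightarrow> fm set" where
  "RS5_logic (_ :: 'w itself) =
     {\<phi>. \<forall>(W :: 'w set) R. rcc5_struct W R \<longrightarrow> valid_frame W R \<phi>}"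

definition reg_closed :: "'a topology \<Rightarrow> 'a set \<Rightarrow> bool" where
  "reg_closed T s \<longleftrightarrow> T closure_of (T interior_of s) = s"

definition top_rel :: "'a topology \<Rightarrow> rel5 \<Rightarrow> 'a set \<Rightarrow> 'a set \<Rightarrow> bool" where
  "top_rel T r s t = (case r of
      EQ \<Rightarrow> s = t
    | PO \<Rightarrow> (T interior_of s) \<inter> (T interior_of t) \<noteq> {} \<and> \<not> s \<subseteq> t \<and> \<not> t \<subseteq> s
    | DR \<Rightarrow> (T interior_of s) \<inter> (T interior_of t) = {}
    | PP \<Rightarrow> s \<subseteq> t \<and> s \<noteq> t
    | PPI \<Rightarrow> t \<subseteq> s \<and> s \<noteq> t)"

definition T_reg :: "'a topology \<Rightarrow> 'a set set" where
  "T_reg T = {s. s \<noteq> {} \<and> reg_closed T s}"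

text \<open>L^S_RCC5 of the class TOP restricted to spaces with carrier type 'a:
  validity in all (non-empty) substructures of R^5(T, T_reg).\<close>
definition TOP_logic :: "'a itself \<Rightarrow> fm set" where
  "TOP_logic (_ :: 'a itself) =
     {\<phi>. \<forall>(T :: 'a topology) W. W \<noteq> {} \<and> W \<subseteq> T_reg T \<longrightarrow> valid_frame W (top_rel T) \<phi>}"

text \<open>L^S_RCC5(R^n, R^n_reg), with n = CARD('n).\<close>
definition Rn_logic :: "'n::finite itself \<Rightarrow> fm set" where
  "Rn_logic (_ :: 'n itself) =
     {\<phi>. \<forall>W :: (real^'n) set set. W \<noteq> {} \<and> W \<subseteq> T_reg euclidean \<longrightarrow>
           valid_frame W (top_rel euclidean) \<phi>}"

datatype recf = Zf | Sf | Pf nat | Cn recf "recf list" | Pr recf recf | Mn recf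

inductive eval :: "recf \<Rightarrow> nat list \<Rightarrow> nat \<Rightarrow> bool" where
  ev_Z: "eval Zf xs 0"
| ev_S: "eval Sf (x # xs) (Suc x)"
| ev_P: "i < length xs \<Longrightarrow> eval (Pf i) xs (xs ! i)"
| ev_Cn: "list_all2 (\<lambda>g y. eval g xs y) gs ys \<Longrightarrow> eval f ys z \<Longrightarrow> eval (Cn f gs) xs z"
| ev_Pr0: "eval f xs z \<Longrightarrow> eval (Pr f g) (0 # xs) z"
| ev_PrS: "eval (Pr f g) (n # xs) r \<Longrightarrow> eval g (r # n # xs) z \<Longrightarrow> eval (Pr f g) (Suc n # xs) z"
| ev_Mn: "eval f (y # xs) 0 \<Longrightarrow> (\<forall>z<y. \<exists>m. eval f (z # xs) (Suc m)) \<Longrightarrow> eval (Mn f) xs y"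

definition r_enum :: "nat set \<Rightarrow> bool" where
  "r_enum A \<longleftrightarrow> (\<exists>f. \<forall>n. n \<in> A \<longleftrightarrow> (\<exists>y. eval f [n] y))"

fun rcode :: "rel5 \<Rightarrow> nat" where
  "rcode EQ = 0" | "rcode PO = 1" | "rcode DR = 2" | "rcode PP = 3" | "rcode PPI = 4"

fun gn :: "fm \<Rightarrow> nat" where
  "gn (Atom p) = prod_encode (0, p)"
| "gn (Neg \<phi>) = prod_encode (1, gn \<phi>)"
| "gn (Conj \<phi> \<psi>) = prod_encode (2, prod_encode (gn \<phi>, gn \<psi>))"
| "gn (Box r \<phi>) = prod_encode (3, prod_encode (rcode r, gn \<phi>))"

end

theory Submission
  imports Defs
begin

inductive_cases evZE: "eval Zf xs y"
inductive_cases evSE: "eval Sf xs y"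
inductive_cases evPE: "eval (Pf i) xs y"
inductive_cases evCnE: "eval (Cn f gs) xs y"
inductive_cases evPrE: "eval (Pr f g) xs y"
inductive_cases evMnE: "eval (Mn f) xs y"

lemma list_all2_det:
  assumes "list_all2 (\<lambda>g y. eval g xs y \<and> (\<forall>y'. eval g xs y' \<longrightarrow> y = y')) gs ys"
    and "list_all2 (\<lambda>g y. eval g xs y) gs ys'"
  shows "ys = ys'"
  using assms by (auto simp: list_all2_conv_all_nth intro!: nth_equalityI)

lemma eval_det: "eval f xs y \<Longrightarrow> eval f xs y' \<Longrightarrow> y = y'"
proof (induction arbitrary: y' rule: eval.induct)
  case (ev_Z xs)
  then show ?case by (auto elim: evZE)
next
  case (ev_S x xs)
  then show ?case by (auto elim: evSE)
next
  case (ev_P i xs)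
  then show ?case by (auto elim: evPE)
next
  case (ev_Cn xs gs ys f z)
  from ev_Cn.prems obtain ys' where a: "list_all2 (\<lambda>g y. eval g xs y) gs ys'" and b: "eval f ys' y'"
    by (auto elim: evCnE)
  have "ys = ys'" using list_all2_det[OF ev_Cn.IH(1) a] .
  then show ?case using ev_Cn.IH(2) b by auto
next
  case (ev_Pr0 f xs z g)
  from ev_Pr0.prems show ?case
    by (cases rule: evPrE) (use ev_Pr0.IH in auto)
next
  case (ev_PrS f g n xs r z)
  from ev_PrS.prems show ?case
    by (cases rule: evPrE) (use ev_PrS.IH in auto)
next
  case (ev_Mn f y xs)
  from ev_Mn.prems have a: "eval f (y' # xs) 0" and b: "\<forall>z<y'. \<exists>m. eval f (z # xs) (Suc m)"
    by (auto elim: evMnE)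
  show ?case
  proof (rule linorder_cases[of y y'])
    assume "y < y'"
    then obtain m where "eval f (y # xs) (Suc m)" using b by auto
    then show ?thesis using ev_Mn.IH(1) by auto
  next
    assume "y' < y"
    then obtain m where "eval f (y' # xs) (Suc m)" "\<forall>y''. eval f (y' # xs) y'' \<longrightarrow> Suc m = y''"
      using ev_Mn.IH(2) by blast
    then show ?thesis using a by auto
  qed
qed

lemma evP': "i < length xs \<Longrightarrow> z = xs ! i \<Longrightarrow> eval (Pf i) xs z"
  using ev_P by auto

lemma evCn1: "eval g1 xs y1 \<Longrightarrow> eval f [y1] z \<Longrightarrow> eval (Cn f [g1]) xs z"
  by (rule ev_Cn[of _ _ "[y1]"]) auto

lemma evCn2: "eval g1 xs y1 \<Longrightarrow> eval g2 xs y2 \<Longrightarrow> eval f [y1, y2] z \<Longrightarrow> eval (Cn f [g1, g2]) xs z"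
  by (rule ev_Cn[of _ _ "[y1, y2]"]) auto

lemma evS': "z = Suc x \<Longrightarrow> eval Sf (x # xs) z"
  using ev_S by auto

lemma eval_Pr:
  assumes "eval f xs (h 0)" "\<And>n. eval g (h n # n # xs) (h (Suc n))"
  shows "eval (Pr f g) (n # xs) (h n)"
proof (induction n)
  case 0
  then show ?case using assms(1) by (rule ev_Pr0)
next
  case (Suc n)
  then show ?case using assms(2) by (rule ev_PrS)
qed

fun cn :: "nat \<Rightarrow> recf" where
  "cn 0 = Zf" | "cn (Suc n) = Cn Sf [cn n]"

lemma eval_cn: "eval (cn n) xs n"
  by (induction n) (auto intro: ev_Z evCn1 evS')

declare cn.simps[simp del]

definition "addf = Pr (Pf 0) (Cn Sf [Pf 0])"
lemma eval_addf: "z = x + y \<Longrightarrow> eval addf [x, y] z"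
  unfolding addf_def
  by (simp, rule eval_Pr[where h="\<lambda>n. n + y"]) (auto intro!: evP' evCn1 evS')

definition "mulf = Pr Zf (Cn addf [Pf 0, Pf 2])"
lemma eval_mulf: "z = x * y \<Longrightarrow> eval mulf [x, y] z"
  unfolding mulf_def
  by (simp, rule eval_Pr[where h="\<lambda>n. n * y"]) (auto intro!: evP' evCn2 ev_Z eval_addf)

definition "predf = Pr Zf (Pf 1)"
lemma eval_predf: "z = x - 1 \<Longrightarrow> eval predf [x] z"
  unfolding predf_def
  by (hypsubst, rule eval_Pr[where h="\<lambda>n. n - 1"]) (auto intro!: evP' ev_Z)

definition "subf = Pr (Pf 0) (Cn predf [Pf 0])"
lemma eval_subf: "z = x - y \<Longrightarrow> eval subf [y, x] z"
  unfolding subf_def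
  by (hypsubst, rule eval_Pr[where h="\<lambda>n. x - n"]) (auto intro!: evP' evCn1 eval_predf)

definition "monf = Cn subf [Pf 1, Pf 0]"
lemma eval_monf: "z = x - y \<Longrightarrow> eval monf [x, y] z"
  unfolding monf_def by (auto intro!: evCn2 evP' eval_subf)

definition "eqf = Cn monf [cn 1, Cn addf [monf, Cn monf [Pf 1, Pf 0]]]"
lemma eval_eqf: "z = (if x = y then 1 else 0) \<Longrightarrow> eval eqf [x, y] z"
proof -
  assume z: "z = (if x = y then 1 else 0)"
  have a: "eval (Cn addf [monf, Cn monf [Pf 1, Pf 0]]) [x,y] ((x-y)+(y-x))"
    by (auto intro!: evCn2 evP' eval_monf eval_addf)
  show ?thesis unfolding eqf_def
    by (rule evCn2[OF eval_cn a], rule eval_monf) (use z in auto)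
qed

definition "powf = Pr (cn 1) (Cn mulf [Pf 0, Pf 2])"
lemma eval_powf: "z = x ^ y \<Longrightarrow> eval powf [y, x] z"
  unfolding powf_def
  by (hypsubst, rule eval_Pr[where h="\<lambda>n. x ^ n"]) (auto intro!: evP' evCn2 evCn1 ev_Z evS' eval_mulf eval_cn)

definition "modstep = Cn mulf [Cn monf [cn 1, Cn eqf [Cn Sf [Pf 0], Pf 2]], Cn Sf [Pf 0]]"
definition "modf = Pr Zf modstep"


lemma eval_modf: "z = x mod y \<Longrightarrow> eval modf [x, y] z"
  unfolding modf_def modstep_def
  apply (hypsubst, rule eval_Pr[where h="\<lambda>n. n mod y"])
   apply (auto intro!: evP' evCn2 evCn1 eval_mulf eval_cn eval_monf eval_eqf evS' ev_Z)
  apply (auto simp: mod_Suc)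
  done


definition "divstep = Cn addf [Pf 0, Cn eqf [Cn Sf [Cn modf [Pf 1, Pf 2]], Pf 2]]"
definition "divf = Pr Zf divstep"
lemma eval_divf: "z = x div y \<Longrightarrow> eval divf [x, y] z"
  unfolding divf_def divstep_def
  apply (hypsubst, rule eval_Pr[where h="\<lambda>n. n div y"])
   apply (auto intro!: evP' evCn2 evCn1 eval_addf eval_cn eval_modf eval_eqf evS' ev_Z)
  apply (auto simp: div_Suc mod_Suc split: if_splits)
  done

datatype tm = Vr nat | C nat | TAdd tm tm | TMul tm tm | TSub tm tm | TDiv tm tm | TMod tm tm | TPow tm tm
datatype fo = FEq tm tm | FLe tm tm | FNot fo | FAnd fo fo | FAll tm fo

fun tv :: "nat list \<Rightarrow> tm \<Rightarrow> nat" where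
  "tv e (Vr i) = (if i < length e then e ! (length e - Suc i) else 0)"
| "tv e (C n) = n"
| "tv e (TAdd a b) = tv e a + tv e b"
| "tv e (TMul a b) = tv e a * tv e b"
| "tv e (TSub a b) = tv e a - tv e b"
| "tv e (TDiv a b) = tv e a div tv e b"
| "tv e (TMod a b) = tv e a mod tv e b"
| "tv e (TPow a b) = tv e a ^ tv e b"

fun fv :: "nat list \<Rightarrow> fo \<Rightarrow> bool" where
  "fv e (FEq a b) = (tv e a = tv e b)"
| "fv e (FLe a b) = (tv e a \<le> tv e b)"
| "fv e (FNot f) = (\<not> fv e f)"
| "fv e (FAnd f g) = (fv e f \<and> fv e g)"
| "fv e (FAll t f) = (\<forall>x < tv e t. fv (x # e) f)"

fun ct :: "nat \<Rightarrow> tm \<Rightarrow> recf" where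
  "ct k (Vr i) = (if i < k then Pf (k - Suc i) else Zf)"
| "ct k (C n) = cn n"
| "ct k (TAdd a b) = Cn addf [ct k a, ct k b]"
| "ct k (TMul a b) = Cn mulf [ct k a, ct k b]"
| "ct k (TSub a b) = Cn monf [ct k a, ct k b]"
| "ct k (TDiv a b) = Cn divf [ct k a, ct k b]"
| "ct k (TMod a b) = Cn modf [ct k a, ct k b]"
| "ct k (TPow a b) = Cn powf [ct k b, ct k a]"

fun cf :: "nat \<Rightarrow> fo \<Rightarrow> recf" where
  "cf k (FEq a b) = Cn eqf [ct k a, ct k b]"
| "cf k (FLe a b) = Cn monf [cn 1, Cn monf [ct k a, ct k b]]"
| "cf k (FNot f) = Cn monf [cn 1, cf k f]"
| "cf k (FAnd f g) = Cn mulf [cf k f, cf k g]"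
| "cf k (FAll t f) = Cn (Pr (cn 1) (Cn mulf [Pf 0, Cn (cf (Suc k) f) (Pf 1 # map (\<lambda>i. Pf (i+2)) [0..<k])]))
                        (ct k t # map Pf [0..<k])"

lemma eval_ct: "length e = k \<Longrightarrow> eval (ct k t) e (tv e t)"
  by (induction t) (auto intro!: evP' ev_Z eval_cn evCn2 eval_addf eval_mulf eval_monf eval_divf eval_modf eval_powf)

lemma la_proj: "length e = k \<Longrightarrow> list_all2 (\<lambda>g y. eval g e y) (map Pf [0..<k]) e"
  by (auto simp: list_all2_conv_all_nth intro!: evP')

lemma la_proj2: "length e = k \<Longrightarrow> list_all2 (\<lambda>g y. eval g (a # b # e) y) (Pf 1 # map (\<lambda>i. Pf (i+2)) [0..<k]) (b # e)"
  apply (simp only: list_all2_Cons)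
  apply (auto simp: list_all2_conv_all_nth intro!: evP')
  done

lemma eval_cf: "length e = k \<Longrightarrow> eval (cf k f) e (if fv e f then 1 else 0)"
proof (induction f arbitrary: k e)
  case (FEq a b)
  then show ?case by (auto intro!: evCn2 eval_ct eval_eqf)
next
  case (FLe a b)
  have "eval (Cn monf [ct k a, ct k b]) e (tv e a - tv e b)"
    using FLe by (auto intro!: evCn2 eval_ct eval_monf)
  then have "eval (Cn monf [cn 1, Cn monf [ct k a, ct k b]]) e (1 - (tv e a - tv e b))"
    by (rule evCn2[OF eval_cn _ eval_monf[OF refl]])
  moreover have "(1 - (tv e a - tv e b)) = (if fv e (FLe a b) then 1 else 0)" by auto
  ultimately show ?case by simp
next
  case (FNot f)
  have "eval (cf k f) e (if fv e f then 1 else 0)" by (rule FNot.IH[OF FNot.prems])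
  then have "eval (Cn monf [cn 1, cf k f]) e (1 - (if fv e f then 1 else 0))"
    by (rule evCn2[OF eval_cn _ eval_monf[OF refl]])
  then show ?case by (auto split: if_splits)
next
  case (FAnd f g)
  then show ?case by (auto intro!: evCn2 eval_mulf)
next
  case (FAll t f)
  define h where "h n = (if \<forall>x<n. fv (x # e) f then 1 else 0::nat)" for n
  have pr: "eval (Pr (cn 1) (Cn mulf [Pf 0, Cn (cf (Suc k) f) (Pf 1 # map (\<lambda>i. Pf (i+2)) [0..<k])])) (n # e) (h n)" for n
  proof (rule eval_Pr)
    show "eval (cn 1) e (h 0)" unfolding h_def using eval_cn[of 1 e] by simp
    fix n
    have inner: "eval (Cn (cf (Suc k) f) (Pf 1 # map (\<lambda>i. Pf (i+2)) [0..<k])) (h n # n # e)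
                   (if fv (n # e) f then 1 else 0)"
      apply (rule ev_Cn[of _ _ "n # e"])
       apply (rule la_proj2[OF FAll.prems])
      using FAll.IH[of "n # e" "Suc k"] FAll.prems by simp
    show "eval (Cn mulf [Pf 0, Cn (cf (Suc k) f) (Pf 1 # map (\<lambda>i. Pf (i+2)) [0..<k])]) (h n # n # e) (h (Suc n))"
      apply (rule evCn2[OF _ inner])
       apply (rule evP', simp, simp)
      apply (rule eval_mulf)
      unfolding h_def by (auto simp: less_Suc_eq)
  qed
  have "eval (cf k (FAll t f)) e (h (tv e t))"
    unfolding cf.simps
    apply (rule ev_Cn[of _ _ "tv e t # e"])
     apply (simp only: list_all2_Cons)
     apply (simp add: eval_ct FAll.prems la_proj)
    by (rule pr)
  then show ?case unfolding h_def by simp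
qed

lemma r_enum_fo:
  assumes "\<And>n. n \<in> A \<longleftrightarrow> (\<exists>N. fv [N, n] P)"
  shows "r_enum A"
  unfolding r_enum_def
proof (intro exI allI)
  fix n
  let ?f = "Mn (cf 2 (FNot P))"
  show "n \<in> A \<longleftrightarrow> (\<exists>y. eval ?f [n] y)"
  proof
    assume "n \<in> A"
    then have ex: "\<exists>N. fv [N, n] P" using assms by auto
    define y where "y = (LEAST N. fv [N, n] P)"
    have "fv [y, n] P" unfolding y_def using ex by (rule LeastI_ex)
    moreover have "\<forall>z<y. \<not> fv [z, n] P" unfolding y_def using not_less_Least by blast
    ultimately have "eval ?f [n] y"
      apply (intro ev_Mn)
      using eval_cf[of "[y, n]" 2 "FNot P"] apply simp
      using eval_cf[of "[_, n]" 2 "FNot P"] by (metis One_nat_def fv.simps(3) length_Cons list.size(3) numeral_2_eq_2)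
    then show "\<exists>y. eval ?f [n] y" by blast
  next
    assume "\<exists>y. eval ?f [n] y"
    then obtain y where "eval ?f [n] y" by blast
    then have "eval (cf 2 (FNot P)) [y, n] 0" by (auto elim: evMnE)
    moreover have "eval (cf 2 (FNot P)) [y, n] (if fv [y, n] (FNot P) then 1 else 0)"
      by (rule eval_cf) simp
    ultimately have "(if fv [y, n] (FNot P) then 1 else 0) = (0::nat)" using eval_det by blast
    then have "fv [y, n] P" by (auto split: if_splits)
    then show "n \<in> A" using assms by auto
  qed
qed

abbreviation pe :: "nat \<Rightarrow> nat \<Rightarrow> nat" where "pe a b \<equiv> prod_encode (a, b)"

lemma triangle_ge: "n \<le> triangle n"
  by (induction n) auto

lemma pe_ge: "a + b \<le> pe a b"
  using triangle_ge[of "a+b"] by (simp add: prod_encode_def)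

lemma pe_gt: "0 < k \<Longrightarrow> m < pe k m"
  using pe_ge[of k m] by simp

lemma pe_ge1: "a \<le> pe a b" and pe_ge2: "b \<le> pe a b"
  using pe_ge[of a b] by auto

fun unr :: "nat \<Rightarrow> rel5" where
  "unr 0 = EQ" | "unr (Suc 0) = PO" | "unr (Suc (Suc 0)) = DR" | "unr (Suc (Suc (Suc 0))) = PP"
| "unr _ = PPI"

lemma unr_rcode[simp]: "unr (rcode r) = r"
  by (cases r) (auto simp: eval_nat_numeral)

lemma rcode_lt5[simp]: "rcode r < 5"
  by (cases r) auto

lemma rcode_unr: "k < 5 \<Longrightarrow> rcode (unr k) = k"
  by (cases k rule: unr.cases) auto

lemma rcode_inj[simp]: "rcode r = rcode s \<longleftrightarrow> r = s"
  by (metis unr_rcode)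

lemma dec_term1: "(Suc k, m) = prod_decode c \<Longrightarrow> m < c"
proof -
  assume "(Suc k, m) = prod_decode c"
  then have "c = pe (Suc k) m" by (metis prod_decode_inverse)
  then show ?thesis using pe_gt[of "Suc k" m] by simp
qed

lemma fst_pd_le: "fst (prod_decode m) \<le> m"
  by (metis le_prod_encode_1 prod.collapse prod_decode_inverse)
lemma snd_pd_le: "snd (prod_decode m) \<le> m"
  by (metis le_prod_encode_2 prod.collapse prod_decode_inverse)

function dec :: "nat \<Rightarrow> fm" where
  "dec c = (case prod_decode c of
      (0, m) \<Rightarrow> Atom m
    | (Suc 0, m) \<Rightarrow> Neg (dec m)
    | (Suc (Suc 0), m) \<Rightarrow> Conj (dec (fst (prod_decode m))) (dec (snd (prod_decode m)))
    | (Suc (Suc (Suc 0)), m) \<Rightarrow> (if fst (prod_decode m) < 5 then Box (unr (fst (prod_decode m))) (dec (snd (prod_decode m))) else Atom 0)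
    | _ \<Rightarrow> Atom 0)"
  by auto
termination
  by (relation "Wellfounded.measure id")
     (auto dest!: dec_term1 intro: le_less_trans[OF fst_pd_le] le_less_trans[OF snd_pd_le])

declare dec.simps[simp del]

lemma dec_pe1: "dec (pe 1 d) = Neg (dec d)"
  by (subst dec.simps) (simp add: prod_encode_inverse)
lemma dec_pe2: "dec (pe 2 (pe d e)) = Conj (dec d) (dec e)"
  by (subst dec.simps) (simp add: prod_encode_inverse numeral_2_eq_2)
lemma dec_pe3: "r < 5 \<Longrightarrow> dec (pe 3 (pe r d)) = Box (unr r) (dec d)"
  by (subst dec.simps) (simp add: prod_encode_inverse numeral_3_eq_3)
lemma dec_pe0: "dec (pe 0 p) = Atom p"
  by (subst dec.simps) (simp add: prod_encode_inverse)

lemma dec_gn[simp]: "dec (gn \<phi>) = \<phi>"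
  by (induction \<phi>) (auto simp: dec_pe0 dec_pe2 dec_pe3 dec_pe1[simplified])

lemma digits_exist:
  assumes "0 < (b::nat)" "\<forall>p<L. f p < b"
  shows "\<exists>a < b ^ L. \<forall>p<L. a div b ^ p mod b = f p"
  using assms(2)
proof (induction L)
  case 0
  then show ?case by auto
next
  case (Suc L)
  then obtain a where a: "a < b ^ L" "\<forall>p<L. a div b ^ p mod b = f p" by auto
  define a' where "a' = a + f L * b ^ L"
  have fL: "f L < b" using Suc.prems by auto
  have "a' < b ^ Suc L"
  proof -
    have "a' < b ^ L + f L * b ^ L" unfolding a'_def using a(1) by simp
    also have "\<dots> = (f L + 1) * b ^ L" by simp
    also have "\<dots> \<le> b * b ^ L" using fL by (intro mult_right_mono) auto
    finally show ?thesis by simp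
  qed
  moreover have "\<forall>p<Suc L. a' div b ^ p mod b = f p"
  proof (intro allI impI)
    fix p assume p: "p < Suc L"
    show "a' div b ^ p mod b = f p"
    proof (cases "p = L")
      case True
      have "a' div b ^ L = f L" unfolding a'_def using a(1) assms(1) by simp
      then show ?thesis using True fL by simp
    next
      case False
      then have pL: "p < L" using p by simp
      then obtain q where q: "L = Suc (p + q)" using less_imp_Suc_add by blast
      have "a' = a + (f L * b ^ q * b) * b ^ p" unfolding a'_def q by (simp add: power_add mult_ac)
      then have "a' div b ^ p = a div b ^ p + (f L * b ^ q) * b"
        using assms(1) by simp
      then have "a' div b ^ p mod b = a div b ^ p mod b" by simp
      then show ?thesis using a(2) pL by simp
    qed
  qed
  ultimately show ?case by blast
qed

definition "TABLE = (22418493373991467656332136023735930945::nat)"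

lemma less5_cases: "(k::nat) < 5 \<Longrightarrow> k = 0 \<or> k = 1 \<or> k = 2 \<or> k = 3 \<or> k = 4"
  by auto

lemma unr_num[simp]: "unr 1 = PO" "unr 2 = DR" "unr 3 = PP" "unr 4 = PPI"
  by (simp_all add: eval_nat_numeral)

lemma tbl_iff:
  assumes "r < 5" "s < 5" "q < 5"
  shows "(TABLE div 2 ^ (25 * r + 5 * s + q) mod 2 = 1) \<longleftrightarrow> unr q \<in> comp5 (unr r) (unr s)"
  using less5_cases[OF assms(1)] less5_cases[OF assms(2)] less5_cases[OF assms(3)]
  by (elim disjE; simp add: TABLE_def)

definition tbl :: "nat \<Rightarrow> nat \<Rightarrow> nat \<Rightarrow> bool" where
  "tbl r s q = (TABLE div 2 ^ (25 * r + 5 * s + q) mod 2 = 1)"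

lemma tbl_rcode: "tbl (rcode r) (rcode s) (rcode q) \<longleftrightarrow> q \<in> comp5 r s"
  unfolding tbl_def using tbl_iff[of "rcode r" "rcode s" "rcode q"] by simp

definition approx :: "nat \<Rightarrow> nat \<Rightarrow> (nat \<Rightarrow> nat \<Rightarrow> nat) \<Rightarrow> (nat \<Rightarrow> nat \<Rightarrow> bool) \<Rightarrow> bool" where
"approx K N \<rho> t \<longleftrightarrow>
 (\<forall>x<N. \<forall>y<N. \<rho> x y \<le> 4) \<and>
 (\<forall>x<N. \<rho> x x = 0) \<and>
 (\<forall>x<N. \<forall>y<N. (\<rho> x y = 0 \<longrightarrow> \<rho> y x = 0) \<and> (\<rho> x y = 1 \<longrightarrow> \<rho> y x = 1) \<and> (\<rho> x y = 2 \<longrightarrow> \<rho> y x = 2)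
     \<and> (\<rho> x y = 3 \<longrightarrow> \<rho> y x = 4) \<and> (\<rho> x y = 4 \<longrightarrow> \<rho> y x = 3)) \<and>
 (\<forall>x<N. \<forall>y<N. \<forall>z<N. tbl (\<rho> x y) (\<rho> y z) (\<rho> x z)) \<and>
 (\<forall>u<N. \<forall>v<N. \<forall>c<K. \<rho> u v = 0 \<longrightarrow> (t u c \<longleftrightarrow> t v c)) \<and>
 (\<forall>u<N. \<forall>c<K. \<forall>d<K. c = pe 1 d \<longrightarrow> (t u c \<longleftrightarrow> \<not> t u d)) \<and>
 (\<forall>u<N. \<forall>c<K. \<forall>d<K. \<forall>e<K. c = pe 2 (pe d e) \<longrightarrow> (t u c \<longleftrightarrow> t u d \<and> t u e)) \<and>
 (\<forall>u<N. \<forall>v<N. \<forall>c<K. \<forall>r<5. \<forall>d<K. c = pe 3 (pe r d) \<longrightarrow> t u c \<longrightarrow> \<rho> u v = r \<longrightarrow> t v d) \<and>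
 (\<forall>u<N. \<forall>c<K. \<forall>r<5. \<forall>d<K. c = pe 3 (pe r d) \<longrightarrow> \<not> t u c \<longrightarrow> pe u c + 1 < N \<longrightarrow>
     \<rho> u (pe u c + 1) = r \<and> \<not> t (pe u c + 1) d) \<and>
 (0 < N \<longrightarrow> \<not> t 0 (K - 1))"

function Fseq :: "('w \<Rightarrow> nat \<Rightarrow> 'w) \<Rightarrow> 'w \<Rightarrow> nat \<Rightarrow> 'w" where
  "Fseq wt w 0 = w"
| "Fseq wt w (Suc n) = wt (Fseq wt w (fst (prod_decode n))) (snd (prod_decode n))"
  by pat_completeness auto
termination
  by (relation "Wellfounded.measure (\<lambda>(_, _, n). n)") (auto intro: le_imp_less_Suc fst_pd_le)
  
lemma Fseq_pe: "Fseq wt w (pe u c + 1) = wt (Fseq wt w u) c"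
  by (simp add: prod_encode_inverse)

lemma Fseq_in: "w \<in> W \<Longrightarrow> (\<And>x c. x \<in> W \<Longrightarrow> wt x c \<in> W) \<Longrightarrow> Fseq wt w n \<in> W"
  by (induction wt w n rule: Fseq.induct) auto

lemma rs_ne: "rcc5_struct W R \<Longrightarrow> W \<noteq> {}"
  and rs_uniq: "rcc5_struct W R \<Longrightarrow> x \<in> W \<Longrightarrow> y \<in> W \<Longrightarrow> \<exists>!r. R r x y"
  and rs_eq: "rcc5_struct W R \<Longrightarrow> x \<in> W \<Longrightarrow> y \<in> W \<Longrightarrow> R EQ x y \<longleftrightarrow> x = y"
  and rs_po: "rcc5_struct W R \<Longrightarrow> x \<in> W \<Longrightarrow> y \<in> W \<Longrightarrow> R PO x y \<longleftrightarrow> R PO y x"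
  and rs_dr: "rcc5_struct W R \<Longrightarrow> x \<in> W \<Longrightarrow> y \<in> W \<Longrightarrow> R DR x y \<longleftrightarrow> R DR y x"
  and rs_pp: "rcc5_struct W R \<Longrightarrow> x \<in> W \<Longrightarrow> y \<in> W \<Longrightarrow> R PP x y \<longleftrightarrow> R PPI y x"
  and rs_comp: "rcc5_struct W R \<Longrightarrow> x \<in> W \<Longrightarrow> y \<in> W \<Longrightarrow> z \<in> W \<Longrightarrow> R r x y \<Longrightarrow> R s y z \<Longrightarrow> \<exists>t\<in>comp5 r s. R t x z"
  by (simp_all add: rcc5_struct_def)

lemma G1:
  assumes st: "rcc5_struct W R" and w0: "w0 \<in> W" and ns: "\<not> sat W R V w0 \<phi>"
  shows "\<exists>\<rho> t. \<forall>N. approx (gn \<phi> + 1) N \<rho> t"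
proof -
  define wit where "wit x c = (case dec c of Box r \<psi> \<Rightarrow>
      (if \<exists>v\<in>W. R r x v \<and> \<not> sat W R V v \<psi> then SOME v. v\<in>W \<and> R r x v \<and> \<not> sat W R V v \<psi> else x) | _ \<Rightarrow> x)" for x c
  have wit_in: "wit x c \<in> W" if "x \<in> W" for x c
  proof (cases "dec c")
    case (Box r \<psi>)
    have "(SOME v. v\<in>W \<and> R r x v \<and> \<not> sat W R V v \<psi>) \<in> W" if "\<exists>v\<in>W. R r x v \<and> \<not> sat W R V v \<psi>"
      using someI_ex[of "\<lambda>v. v\<in>W \<and> R r x v \<and> \<not> sat W R V v \<psi>"] that by blast
    then show ?thesis unfolding wit_def Box using \<open>x \<in> W\<close> by auto
  qed (auto simp: wit_def that)
  have wit_box: "R r x (wit x c) \<and> \<not> sat W R V (wit x c) \<psi>"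
    if "x \<in> W" "dec c = Box r \<psi>" "\<not> sat W R V x (Box r \<psi>)" for x c r \<psi>
  proof -
    have ex: "\<exists>v. v\<in>W \<and> R r x v \<and> \<not> sat W R V v \<psi>" using that(3) by auto
    then show ?thesis unfolding wit_def that(2) using someI_ex[OF ex] by auto
  qed
  define F where "F = Fseq wit w0"
  have F_in: "F n \<in> W" for n unfolding F_def by (rule Fseq_in[OF w0 wit_in])
  have F_pe: "F (pe u c + 1) = wit (F u) c" for u c unfolding F_def by (rule Fseq_pe)
  define rel where "rel x y = (THE r. R r x y)" for x y
  have rel: "R (rel x y) x y" if "x \<in> W" "y \<in> W" for x y
    unfolding rel_def using rs_uniq[OF st that] by (rule theI')
  have rel_eq: "rel x y = r" if "x \<in> W" "y \<in> W" "R r x y" for x y r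
    using rs_uniq[OF st that(1,2)] rel[OF that(1,2)] that(3) by blast
  define \<rho> where "\<rho> m n = rcode (rel (F m) (F n))" for m n
  define t where "t u c = sat W R V (F u) (dec c)" for u c
  have \<rho>_r: "\<rho> m n = rcode r \<longleftrightarrow> R r (F m) (F n)" for m n r
    unfolding \<rho>_def using rel[OF F_in F_in] rel_eq[OF F_in F_in] by auto
  have \<rho>_r': "\<rho> m n = k \<longleftrightarrow> R (unr k) (F m) (F n)" if "k < 5" for m n k
    using \<rho>_r[of m n "unr k"] rcode_unr[OF that] by simp
  have "approx (gn \<phi> + 1) N \<rho> t" for N
    unfolding approx_def
  proof (intro conjI allI impI)
    show "\<rho> x y \<le> 4" for x y unfolding \<rho>_def using rcode_lt5[of "rel (F x) (F y)"] by linarith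
    show "\<rho> x x = 0" for x using \<rho>_r[of x x EQ] rs_eq[OF st F_in F_in] by simp
    fix x y
    show "\<rho> x y = 0 \<Longrightarrow> \<rho> y x = 0" using \<rho>_r[of x y EQ] \<rho>_r[of y x EQ] rs_eq[OF st F_in F_in] by auto
    show "\<rho> x y = 1 \<Longrightarrow> \<rho> y x = 1" using \<rho>_r[of x y PO] \<rho>_r[of y x PO] rs_po[OF st F_in F_in] by auto
    show "\<rho> x y = 2 \<Longrightarrow> \<rho> y x = 2" using \<rho>_r[of x y DR] \<rho>_r[of y x DR] rs_dr[OF st F_in F_in] by auto
    show "\<rho> x y = 3 \<Longrightarrow> \<rho> y x = 4" using \<rho>_r[of x y PP] \<rho>_r[of y x PPI] rs_pp[OF st F_in F_in] by auto
    show "\<rho> x y = 4 \<Longrightarrow> \<rho> y x = 3" using \<rho>_r[of x y PPI] \<rho>_r[of y x PP] rs_pp[OF st F_in F_in] by auto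
  next
    fix x y z
    obtain q where "q \<in> comp5 (rel (F x) (F y)) (rel (F y) (F z))" "R q (F x) (F z)"
      using rs_comp[OF st F_in F_in F_in rel[OF F_in F_in] rel[OF F_in F_in]] by blast
    then show "tbl (\<rho> x y) (\<rho> y z) (\<rho> x z)"
      unfolding \<rho>_def using tbl_rcode rel_eq[OF F_in F_in] by metis
  next
    fix u v c assume "\<rho> u v = 0"
    then have "F u = F v" using \<rho>_r[of u v EQ] rs_eq[OF st F_in F_in] by simp
    then show "t u c = t v c" unfolding t_def by simp
  next
    fix u c d assume "c = pe 1 d"
    then show "t u c = (\<not> t u d)" unfolding t_def by (simp add: dec_pe1[simplified])
  next
    fix u c d e assume "c = pe 2 (pe d e)"
    then show "t u c = (t u d \<and> t u e)" unfolding t_def by (simp add: dec_pe2)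
  next
    fix u v c r d assume a: "r < 5" "c = pe 3 (pe r d)" "t u c" "\<rho> u v = r"
    then show "t v d" unfolding t_def using dec_pe3[OF a(1)] \<rho>_r'[OF a(1)] F_in by auto
  next
    fix u c r d assume a: "r < 5" "c = pe 3 (pe r d)" "\<not> t u c"
    have dc: "dec c = Box (unr r) (dec d)" using a dec_pe3 by simp
    have "\<not> sat W R V (F u) (Box (unr r) (dec d))" using a(3) dc unfolding t_def by simp
    from wit_box[OF F_in dc this]
    show "\<rho> u (pe u c + 1) = r" "\<not> t (pe u c + 1) d"
      unfolding t_def F_pe using \<rho>_r'[OF a(1)] F_pe by auto
  next
    show "\<not> t 0 (gn \<phi> + 1 - 1)" unfolding t_def F_def using ns by simp
  qed
  then show ?thesis by blast
qed

lemma comp5_EQ2[simp]: "comp5 r EQ = {r}"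
  by (cases r) auto

lemma unr_EQ: "q < 5 \<Longrightarrow> unr q = EQ \<longleftrightarrow> q = 0"
  by (metis rcode.simps(1) rcode_unr unr.simps(1))

lemma tbl_comp: "a \<le> 4 \<Longrightarrow> b \<le> 4 \<Longrightarrow> q \<le> 4 \<Longrightarrow> tbl a b q \<Longrightarrow> unr q \<in> comp5 (unr a) (unr b)"
  unfolding tbl_def using tbl_iff[of a b q] by simp

lemmas aD1 = approx_def[THEN iffD1, THEN conjunct1]
lemmas aD2 = approx_def[THEN iffD1, THEN conjunct2, THEN conjunct1]
lemmas aD3 = approx_def[THEN iffD1, THEN conjunct2, THEN conjunct2, THEN conjunct1]
lemmas aD4 = approx_def[THEN iffD1, THEN conjunct2, THEN conjunct2, THEN conjunct2, THEN conjunct1]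
lemmas aD5 = approx_def[THEN iffD1, THEN conjunct2, THEN conjunct2, THEN conjunct2, THEN conjunct2, THEN conjunct1]
lemmas aD6 = approx_def[THEN iffD1, THEN conjunct2, THEN conjunct2, THEN conjunct2, THEN conjunct2, THEN conjunct2, THEN conjunct1]
lemmas aD7 = approx_def[THEN iffD1, THEN conjunct2, THEN conjunct2, THEN conjunct2, THEN conjunct2, THEN conjunct2, THEN conjunct2, THEN conjunct1]
lemmas aD8 = approx_def[THEN iffD1, THEN conjunct2, THEN conjunct2, THEN conjunct2, THEN conjunct2, THEN conjunct2, THEN conjunct2, THEN conjunct2, THEN conjunct1]
lemmas aD9 = approx_def[THEN iffD1, THEN conjunct2, THEN conjunct2, THEN conjunct2, THEN conjunct2, THEN conjunct2, THEN conjunct2, THEN conjunct2, THEN conjunct2, THEN conjunct1]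
lemmas aD10 = approx_def[THEN iffD1, THEN conjunct2, THEN conjunct2, THEN conjunct2, THEN conjunct2, THEN conjunct2, THEN conjunct2, THEN conjunct2, THEN conjunct2, THEN conjunct2]

context
  fixes K \<rho> t
  assumes g: "\<forall>N. approx K N \<rho> t"
begin

lemma g_le4: "\<rho> x y \<le> 4"
  using aD1[OF g[rule_format, of "Suc (x + y)"]] by simp
lemma g_refl: "\<rho> x x = 0"
  using aD2[OF g[rule_format, of "Suc x"]] by simp
lemma g_sym: "(\<rho> x y = 0 \<longrightarrow> \<rho> y x = 0) \<and> (\<rho> x y = 1 \<longrightarrow> \<rho> y x = 1) \<and> (\<rho> x y = 2 \<longrightarrow> \<rho> y x = 2)
     \<and> (\<rho> x y = 3 \<longrightarrow> \<rho> y x = 4) \<and> (\<rho> x y = 4 \<longrightarrow> \<rho> y x = 3)"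
  by (rule aD3[OF g[rule_format, of "Suc (x + y)"], rule_format, of x y]) auto

lemmas g_sym0 = g_sym[THEN conjunct1, rule_format]
lemmas g_sym1 = g_sym[THEN conjunct2, THEN conjunct1, rule_format]
lemmas g_sym2 = g_sym[THEN conjunct2, THEN conjunct2, THEN conjunct1, rule_format]
lemmas g_sym3 = g_sym[THEN conjunct2, THEN conjunct2, THEN conjunct2, THEN conjunct1, rule_format]
lemmas g_sym4 = g_sym[THEN conjunct2, THEN conjunct2, THEN conjunct2, THEN conjunct2, rule_format]

lemma g_tbl: "tbl (\<rho> x y) (\<rho> y z) (\<rho> x z)"
  using aD4[OF g[rule_format, of "Suc (x + y + z)"]] by simp
lemma g_comp: "unr (\<rho> x z) \<in> comp5 (unr (\<rho> x y)) (unr (\<rho> y z))"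
  by (rule tbl_comp[OF g_le4 g_le4 g_le4 g_tbl])
lemma g_eqt: "\<rho> u v = 0 \<Longrightarrow> c < K \<Longrightarrow> t u c = t v c"
  using aD5[OF g[rule_format, of "Suc (u + v)"]] by simp
lemma g_neg: "c < K \<Longrightarrow> d < K \<Longrightarrow> c = pe 1 d \<Longrightarrow> t u c = (\<not> t u d)"
  using aD6[OF g[rule_format, of "Suc u"]] by simp
lemma g_conj: "c < K \<Longrightarrow> d < K \<Longrightarrow> e < K \<Longrightarrow> c = pe 2 (pe d e) \<Longrightarrow> t u c = (t u d \<and> t u e)"
  using aD7[OF g[rule_format, of "Suc u"]] by simp
lemma g_box: "c < K \<Longrightarrow> r < 5 \<Longrightarrow> d < K \<Longrightarrow> c = pe 3 (pe r d) \<Longrightarrow> t u c \<Longrightarrow> \<rho> u v = r \<Longrightarrow> t v d"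
  by (rule aD8[OF g[rule_format, of "Suc (u + v)"], rule_format, of u v c r d]) auto
lemma g_wit: "c < K \<Longrightarrow> r < 5 \<Longrightarrow> d < K \<Longrightarrow> c = pe 3 (pe r d) \<Longrightarrow> \<not> t u c \<Longrightarrow>
    \<rho> u (pe u c + 1) = r \<and> \<not> t (pe u c + 1) d"
proof -
  assume a: "c < K" "r < 5" "d < K" "c = pe 3 (pe r d)" "\<not> t u c"
  have "u < pe u c + 2" using pe_ge1[of u c] by simp
  then show ?thesis using aD9[OF g[rule_format, of "pe u c + 2"]] a by simp
qed
lemma g_root: "\<not> t 0 (K - 1)"
  using aD10[OF g[rule_format, of "Suc 0"]] by simp

lemma g_comp_rcode: "\<rho> x z = rcode q" if "\<rho> x y = rcode r" "\<rho> y z = 0" "q = r"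
proof -
  have "unr (\<rho> x z) \<in> comp5 r EQ" using g_comp[of x z y] that by (simp add: rcode_unr[of 0, simplified])
  then have "unr (\<rho> x z) = r" by simp
  moreover have "\<rho> x z < 5" using g_le4[of x z] by simp
  ultimately show ?thesis using rcode_unr[of "\<rho> x z"] that(3) by simp
qed

end

lemma G2:
  assumes g: "\<forall>N. approx (gn \<phi> + 1) N \<rho> t"
  shows "\<exists>W::nat set. \<exists>R V. rcc5_struct W R \<and> (\<exists>w\<in>W. \<not> sat W R V w \<phi>)"
proof -
  define K where "K = gn \<phi> + 1"
  have g': "\<forall>N. approx K N \<rho> t" using g K_def by simp
  define W where "W = {u::nat. \<forall>v<u. \<rho> v u \<noteq> 0}"
  define R where "R r x y = (\<rho> x y = rcode r)" for r x y
  define V where "V p = {u. t u (pe 0 p)}" for p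
  have le5: "\<rho> x y < 5" for x y using g_le4[OF g', of x y] by simp
  define rep where "rep w = (LEAST v. \<rho> v w = 0)" for w
  have rep1: "\<rho> (rep w) w = 0" for w
    unfolding rep_def by (rule LeastI[of _ w]) (rule g_refl[OF g'])
  have rep2: "rep w \<in> W" for w
  proof -
    have "\<rho> v (rep w) \<noteq> 0" if "v < rep w" for v
    proof
      assume "\<rho> v (rep w) = 0"
      have nv: "\<rho> v w \<noteq> 0" using not_less_Least[OF that[unfolded rep_def]] by (simp add: rep_def)
      have "unr (\<rho> v w) \<in> comp5 (unr (\<rho> v (rep w))) (unr (\<rho> (rep w) w))" by (rule g_comp[OF g'])
      then have "unr (\<rho> v w) = EQ" using \<open>\<rho> v (rep w) = 0\<close> rep1 by simp
      then show False using nv unr_EQ[OF le5[of v w]] by simp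
    qed
    then show ?thesis unfolding W_def by blast
  qed
  have Req: "R EQ x y \<longleftrightarrow> x = y" if "x \<in> W" "y \<in> W" for x y
  proof
    assume "R EQ x y"
    then have e: "\<rho> x y = 0" unfolding R_def by simp
    show "x = y"
    proof (rule linorder_cases[of x y])
      assume "x < y" then show ?thesis using that(2) e unfolding W_def by auto
    next
      assume "y < x" then show ?thesis using that(1) g_sym0[OF g' e] unfolding W_def by auto
    qed
  qed (simp add: R_def g_refl[OF g'])
  have st: "rcc5_struct W R"
    unfolding rcc5_struct_def
  proof (intro conjI ballI allI impI)
    show "W \<noteq> {}" unfolding W_def by auto
  next
    fix x y assume "x \<in> W" "y \<in> W"
    show "\<exists>!r. R r x y"
    proof
      show "R (unr (\<rho> x y)) x y" unfolding R_def using rcode_unr[OF le5] by simp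
    next
      fix r assume "R r x y"
      then show "r = unr (\<rho> x y)" unfolding R_def by simp
    qed
    show "R EQ x y \<longleftrightarrow> x = y" using Req \<open>x \<in> W\<close> \<open>y \<in> W\<close> by blast
    show "R PO x y \<longleftrightarrow> R PO y x" unfolding R_def using g_sym1[OF g', of x y] g_sym1[OF g', of y x] by auto
    show "R DR x y \<longleftrightarrow> R DR y x" unfolding R_def using g_sym2[OF g', of x y] g_sym2[OF g', of y x] by auto
    show "R PP x y \<longleftrightarrow> R PPI y x" unfolding R_def using g_sym3[OF g', of x y] g_sym4[OF g', of y x] by auto
  next
    fix x y z r s assume "x \<in> W" "y \<in> W" "z \<in> W" "R r x y" "R s y z"
    then have "unr (\<rho> x z) \<in> comp5 r s" using g_comp[OF g', of x z y] unfolding R_def by simp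
    moreover have "R (unr (\<rho> x z)) x z" unfolding R_def using rcode_unr[OF le5] by simp
    ultimately show "\<exists>q\<in>comp5 r s. R q x z" by blast
  qed
  have truth: "gn \<psi> < K \<Longrightarrow> u \<in> W \<Longrightarrow> sat W R V u \<psi> \<longleftrightarrow> t u (gn \<psi>)" for \<psi> u
  proof (induction \<psi> arbitrary: u)
    case (Atom p)
    then show ?case unfolding V_def by simp
  next
    case (Neg \<psi>)
    have lt: "gn \<psi> < K" using Neg.prems pe_gt[of 1 "gn \<psi>"] by simp
    show ?case using Neg.IH[OF lt Neg.prems(2)] g_neg[OF g' Neg.prems(1)[simplified] lt] by simp
  next
    case (Conj \<psi>1 \<psi>2)
    have lt: "gn \<psi>1 < K" "gn \<psi>2 < K"
      using Conj.prems(1) pe_gt[of 2 "pe (gn \<psi>1) (gn \<psi>2)"] pe_ge[of "gn \<psi>1" "gn \<psi>2"]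
      by simp_all
    show ?case using Conj.IH(1)[OF lt(1) Conj.prems(2)] Conj.IH(2)[OF lt(2) Conj.prems(2)]
        g_conj[OF g' Conj.prems(1)[simplified] lt] by simp
  next
    case (Box r \<psi>)
    define c where "c = gn (Box r \<psi>)"
    have c: "c = pe 3 (pe (rcode r) (gn \<psi>))" unfolding c_def by simp
    have cK: "c < K" using Box.prems c_def by simp
    have lt: "gn \<psi> < K" using cK c pe_gt[of 3 "pe (rcode r) (gn \<psi>)"] pe_ge[of "rcode r" "gn \<psi>"] by simp
    show ?case
    proof
      assume s: "sat W R V u (Box r \<psi>)"
      show "t u (gn (Box r \<psi>))"
      proof (rule ccontr)
        assume nt: "\<not> t u (gn (Box r \<psi>))"
        define w where "w = pe u c + 1"
        have w: "\<rho> u w = rcode r" "\<not> t w (gn \<psi>)"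
          using g_wit[OF g' cK rcode_lt5 lt c] nt unfolding w_def c_def by auto
        have "\<rho> w (rep w) = 0" using g_sym0[OF g' rep1] .
        then have "\<rho> u (rep w) = rcode r" by (rule g_comp_rcode[OF g' w(1)]) simp
        then have "R r u (rep w)" unfolding R_def by simp
        then have "sat W R V (rep w) \<psi>" using s rep2 by simp
        then have "t (rep w) (gn \<psi>)" using Box.IH[OF lt rep2] by simp
        then have "t w (gn \<psi>)" using g_eqt[OF g' rep1 lt] by simp
        then show False using w(2) by simp
      qed
    next
      assume tt: "t u (gn (Box r \<psi>))"
      show "sat W R V u (Box r \<psi>)"
      proof (simp, intro ballI impI)
        fix v assume "v \<in> W" "R r u v"
        then have "\<rho> u v = rcode r" unfolding R_def by simp
        then have "t v (gn \<psi>)" using g_box[OF g' cK rcode_lt5 lt c] tt c_def by simp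
        then show "sat W R V v \<psi>" using Box.IH[OF lt \<open>v \<in> W\<close>] by simp
      qed
    qed
  qed
  have "0 \<in> W" unfolding W_def by simp
  moreover have "\<not> t 0 (gn \<phi>)" using g_root[OF g'] K_def by simp
  ultimately have "\<not> sat W R V 0 \<phi>" using truth[of \<phi> 0] K_def by simp
  then show ?thesis using st \<open>0 \<in> W\<close> by blast
qed

lemma konig:
  fixes P :: "nat \<Rightarrow> 'x \<Rightarrow> bool" and res :: "nat \<Rightarrow> 'x \<Rightarrow> 'x"
  assumes fin: "\<And>n. finite {x. P n x}"
    and down: "\<And>n m x. n \<le> m \<Longrightarrow> P m x \<Longrightarrow> P n (res n x)"
    and rr: "\<And>n m x. n \<le> m \<Longrightarrow> res n (res m x) = res n x"
    and idem: "\<And>n x. P n x \<Longrightarrow> res n x = x"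
    and ex: "\<And>n. \<exists>x. P n x"
  shows "\<exists>s. \<forall>n. P n (s n) \<and> (\<forall>m\<ge>n. res n (s m) = s n)"
proof -
  define good where "good n x \<longleftrightarrow> P n x \<and> (\<forall>m\<ge>n. \<exists>y. P m y \<and> res n y = x)" for n x
  have pig: "\<exists>x. cand x \<and> good n x"
    if cP: "\<And>x. cand x \<Longrightarrow> P n x" and cm: "\<And>m. m \<ge> n \<Longrightarrow> \<exists>y. P m y \<and> cand (res n y)"
    for cand n
  proof (rule ccontr)
    assume "\<not> ?thesis"
    then have nb: "\<exists>m\<ge>n. \<forall>y. P m y \<longrightarrow> res n y \<noteq> x" if "cand x" for x
      using that cP unfolding good_def by blast
    define M where "M x = (SOME m. m \<ge> n \<and> (\<forall>y. P m y \<longrightarrow> res n y \<noteq> x))" for x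
    have M: "M x \<ge> n \<and> (\<forall>y. P (M x) y \<longrightarrow> res n y \<noteq> x)" if "cand x" for x
      unfolding M_def using someI_ex[OF nb[OF that]] by simp
    have "{x. cand x} \<subseteq> {x. P n x}" using cP by blast
    then have finC: "finite {x. cand x}" using fin[of n] by (rule finite_subset)
    define M0 where "M0 = Max (insert n (M ` {x. cand x}))"
    have M0: "n \<le> M0" "\<And>x. cand x \<Longrightarrow> M x \<le> M0"
      unfolding M0_def using finC by auto
    obtain y where y: "P M0 y" "cand (res n y)" using cm[OF M0(1)] by blast
    define x where "x = res n y"
    have "cand x" using y x_def by simp
    have "P (M x) (res (M x) y)" by (rule down[OF M0(2)[OF \<open>cand x\<close>] y(1)])
    have nM: "n \<le> M x" using M[OF \<open>cand x\<close>] by simp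
    moreover have "res n (res (M x) y) = x" using rr[OF nM, of y] x_def by simp
    ultimately show False using M[OF \<open>cand x\<close>] \<open>P (M x) (res (M x) y)\<close> by blast
  qed
  have g0: "\<exists>x. good 0 x"
    using pig[of "P 0" 0] ex down by blast
  have gS: "\<exists>x'. good (Suc n) x' \<and> res n x' = x" if gx: "good n x" for n x
  proof -
    have "\<exists>x'. (P (Suc n) x' \<and> res n x' = x) \<and> good (Suc n) x'"
    proof (rule pig)
      fix m assume "Suc n \<le> m"
      then obtain y where "P m y" "res n y = x" using gx unfolding good_def by (meson Suc_leD)
      then show "\<exists>y. P m y \<and> P (Suc n) (res (Suc n) y) \<and> res n (res (Suc n) y) = x"
        using down[OF \<open>Suc n \<le> m\<close>] rr[of n "Suc n"] by auto
    qed simp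
    then show ?thesis by blast
  qed
  define s where "s = rec_nat (SOME x. good 0 x) (\<lambda>n prev. SOME x'. good (Suc n) x' \<and> res n x' = prev)"
  have s0: "s 0 = (SOME x. good 0 x)" unfolding s_def by simp
  have sS: "s (Suc n) = (SOME x'. good (Suc n) x' \<and> res n x' = s n)" for n unfolding s_def by simp
  have sg: "good n (s n) \<and> res n (s (Suc n)) = s n" for n
  proof (induction n)
    case 0
    have "good 0 (s 0)" unfolding s0 using someI_ex[OF g0] .
    then show ?case using someI_ex[OF gS[OF \<open>good 0 (s 0)\<close>]] sS[of 0] by simp
  next
    case (Suc n)
    have "good (Suc n) (s (Suc n))" using someI_ex[OF gS[OF Suc[THEN conjunct1]]] sS[of n] by simp
    then show ?case using someI_ex[OF gS[OF \<open>good (Suc n) (s (Suc n))\<close>]] sS[of "Suc n"] by simp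
  qed
  have "\<forall>m\<ge>n. res n (s m) = s n" for n
  proof (intro allI impI)
    fix m assume "n \<le> m"
    then show "res n (s m) = s n"
    proof (induction m rule: dec_induct)
      case base
      then show ?case using idem sg unfolding good_def by blast
    next
      case (step m)
      have "res n (s (Suc m)) = res n (res m (s (Suc m)))" using rr[OF step(1)] by simp
      also have "\<dots> = res n (s m)" using sg[of m] by simp
      finally show ?case using step(3) by simp
    qed
  qed
  then show ?thesis using sg unfolding good_def by blast
qed

lemma ball_mono1: "(n::nat) \<le> m \<Longrightarrow> \<forall>u<m. P u \<Longrightarrow> \<forall>u<n. P u"
  by simp

lemma ball_mono2: "(n::nat) \<le> m \<Longrightarrow> \<forall>u<m. \<forall>v<m. P u v \<Longrightarrow> \<forall>u<n. \<forall>v<n. P u v"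
  by simp

lemma approx_mono:
  assumes "n \<le> m" "approx K m \<rho> t"
  shows "approx K n \<rho> t"
  unfolding approx_def
  apply (intro conjI)
  subgoal using aD1[OF assms(2)] assms(1) by (meson less_le_trans)
  subgoal using aD2[OF assms(2)] assms(1) by (meson less_le_trans)
  subgoal using aD3[OF assms(2)] assms(1) by (meson less_le_trans)
  subgoal using aD4[OF assms(2)] assms(1) by (meson less_le_trans)
  subgoal using aD5[OF assms(2)] assms(1) by (meson less_le_trans)
  subgoal by (rule ball_mono1[OF assms(1) aD6[OF assms(2)]])
  subgoal by (rule ball_mono1[OF assms(1) aD7[OF assms(2)]])
  subgoal by (rule ball_mono2[OF assms(1) aD8[OF assms(2)]])
  subgoal
  proof (intro allI impI)
    fix u c r d assume h: "u < n" "c < K" "r < 5" "d < K" "c = pe 3 (pe r d)" "\<not> t u c" "pe u c + 1 < n"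
    then show "\<rho> u (pe u c + 1) = r \<and> \<not> t (pe u c + 1) d"
      using aD9[OF assms(2), rule_format, of u c r d] assms(1) by simp
  qed
  subgoal using aD10[OF assms(2)] assms(1) by (meson less_le_trans)
  done

lemma approx_cong:
  assumes "0 < K" "\<forall>x<N. \<forall>y<N. \<rho> x y = \<rho>' x y" "\<forall>u<N. \<forall>c<K. t u c = t' u c"
  shows "approx K N \<rho> t = approx K N \<rho>' t'"
  unfolding approx_def using assms by simp

definition resf :: "nat \<Rightarrow> nat \<Rightarrow> (nat \<Rightarrow> nat \<Rightarrow> nat) \<times> (nat \<Rightarrow> nat \<Rightarrow> bool) \<Rightarrow> (nat \<Rightarrow> nat \<Rightarrow> nat) \<times> (nat \<Rightarrow> nat \<Rightarrow> bool)" where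
  "resf K n x = ((\<lambda>a b. if a < n \<and> b < n then fst x a b else 0), (\<lambda>u c. if u < n \<and> c < K then snd x u c else False))"

lemma finite_curried:
  assumes "finite D" "finite B"
  shows "finite {f :: 'a \<Rightarrow> 'b \<Rightarrow> 'c. \<forall>a b. ((a, b) \<in> D \<longrightarrow> f a b \<in> B) \<and> ((a, b) \<notin> D \<longrightarrow> f a b = d)}"
proof -
  have "{f :: 'a \<Rightarrow> 'b \<Rightarrow> 'c. \<forall>a b. ((a, b) \<in> D \<longrightarrow> f a b \<in> B) \<and> ((a, b) \<notin> D \<longrightarrow> f a b = d)}
      \<subseteq> curry ` {g. \<forall>p. (p \<in> D \<longrightarrow> g p \<in> B) \<and> (p \<notin> D \<longrightarrow> g p = d)}"
  proof
    fix f assume "f \<in> {f :: 'a \<Rightarrow> 'b \<Rightarrow> 'c. \<forall>a b. ((a, b) \<in> D \<longrightarrow> f a b \<in> B) \<and> ((a, b) \<notin> D \<longrightarrow> f a b = d)}"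
    then have "case_prod f \<in> {g. \<forall>p. (p \<in> D \<longrightarrow> g p \<in> B) \<and> (p \<notin> D \<longrightarrow> g p = d)}" by auto
    moreover have "f = curry (case_prod f)" by simp
    ultimately show "f \<in> curry ` {g. \<forall>p. (p \<in> D \<longrightarrow> g p \<in> B) \<and> (p \<notin> D \<longrightarrow> g p = d)}" by blast
  qed
  moreover have "finite (curry ` {g. \<forall>p. (p \<in> D \<longrightarrow> g p \<in> B) \<and> (p \<notin> D \<longrightarrow> g p = d)})"
    by (rule finite_imageI, rule finite_set_of_finite_funs[OF assms])
  ultimately show ?thesis by (rule finite_subset)
qed

lemma compactness:
  assumes K: "0 < K" and ex: "\<forall>N. \<exists>\<rho> t. approx K N \<rho> t"
  shows "\<exists>\<rho> t. \<forall>N. approx K N \<rho> t"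
proof -
  define P where "P n x \<longleftrightarrow> approx K n (fst x) (snd x) \<and> resf K n x = x" for n x
  have res_approx: "approx K n (fst (resf K n x)) (snd (resf K n x)) = approx K n (fst x) (snd x)" for n x
    unfolding resf_def by (rule approx_cong[OF K]) auto
  have fin: "finite {x. P n x}" for n
  proof -
    define SA where "SA = {f. \<forall>a b. ((a, b) \<in> {..<n} \<times> {..<n} \<longrightarrow> f a b \<in> {..4}) \<and> ((a, b) \<notin> {..<n} \<times> {..<n} \<longrightarrow> f a b = (0::nat))}"
    define SB where "SB = {f. \<forall>a b. ((a, b) \<in> {..<n} \<times> {..<K} \<longrightarrow> f a b \<in> UNIV) \<and> ((a, b) \<notin> {..<n} \<times> {..<K} \<longrightarrow> f a b = False)}"
    have "{x. P n x} \<subseteq> SA \<times> SB"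
    proof
      fix x assume "x \<in> {x. P n x}"
      then have a: "approx K n (fst x) (snd x)" and r: "resf K n x = x" unfolding P_def by auto
      have "fst x a b \<le> 4" if "a < n" "b < n" for a b using aD1[OF a] that by simp
      moreover have "fst x a b = 0" if "\<not> (a < n \<and> b < n)" for a b
      proof -
        have "fst x a b = fst (resf K n x) a b" using r by simp
        also have "\<dots> = 0" using that unfolding resf_def by auto
        finally show ?thesis .
      qed
      moreover have "snd x a b = False" if "\<not> (a < n \<and> b < K)" for a b
      proof -
        have "snd x a b = snd (resf K n x) a b" using r by simp
        also have "\<dots> = False" using that unfolding resf_def by auto
        finally show ?thesis .
      qed
      ultimately show "x \<in> SA \<times> SB" unfolding SA_def SB_def by (cases x) auto
    qed
    moreover have "finite (SA \<times> SB)"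
      unfolding SA_def SB_def by (intro finite_cartesian_product finite_curried) auto
    ultimately show ?thesis by (rule finite_subset)
  qed
  have rr: "resf K n (resf K m x) = resf K n x" if "n \<le> m" for n m x
    using that unfolding resf_def by (auto simp: fun_eq_iff)
  have down: "P n (resf K n x)" if "n \<le> m" "P m x" for n m x
    unfolding P_def using res_approx approx_mono[OF that(1)] that(2) rr[OF order_refl] unfolding P_def by simp
  have idem: "resf K n x = x" if "P n x" for n x using that unfolding P_def by simp
  have exP: "\<exists>x. P n x" for n
  proof -
    obtain \<rho> t where "approx K n \<rho> t" using ex by blast
    then have "P n (resf K n (\<rho>, t))" unfolding P_def using res_approx rr[OF order_refl] by simp
    then show ?thesis by blast
  qed
  have "\<exists>s. \<forall>n. P n (s n) \<and> (\<forall>m\<ge>n. resf K n (s m) = s n)"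
  proof (rule konig[of P "resf K"])
    show "finite {x. P n x}" for n by (rule fin)
    show "P n (resf K n x)" if "n \<le> m" "P m x" for n m x using down[OF that] .
    show "resf K n (resf K m x) = resf K n x" if "n \<le> m" for n m x using rr[OF that] .
    show "resf K n x = x" if "P n x" for n x using idem[OF that] .
    show "\<exists>x. P n x" for n by (rule exP)
  qed
  then obtain s where s: "\<And>n. P n (s n)" "\<And>n m. n \<le> m \<Longrightarrow> resf K n (s m) = s n"
    by blast
  define \<rho> where "\<rho> a b = fst (s (Suc (a + b))) a b" for a b
  define t where "t u c = snd (s (Suc u)) u c" for u c
  have agree_fst: "fst (s M) a b = fst (s N) a b" if "a < M" "b < M" "a < N" "b < N" for M N a b
  proof (cases "M \<le> N")
    case True
    then have "fst (s M) a b = fst (resf K M (s N)) a b" using s(2) by simp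
    then show ?thesis using that unfolding resf_def by simp
  next
    case False
    then have "fst (s N) a b = fst (resf K N (s M)) a b" using s(2) by simp
    then show ?thesis using that unfolding resf_def by simp
  qed
  have agree_snd: "snd (s M) u c = snd (s N) u c" if "u < M" "u < N" "c < K" for M N u c
  proof (cases "M \<le> N")
    case True
    then have "snd (s M) u c = snd (resf K M (s N)) u c" using s(2) by simp
    then show ?thesis using that unfolding resf_def by simp
  next
    case False
    then have "snd (s N) u c = snd (resf K N (s M)) u c" using s(2) by simp
    then show ?thesis using that unfolding resf_def by simp
  qed
  have "approx K N \<rho> t" for N
  proof -
    have "approx K N (fst (s N)) (snd (s N))" using s(1)[of N] unfolding P_def by simp
    moreover have "approx K N (fst (s N)) (snd (s N)) = approx K N \<rho> t"
      apply (rule approx_cong[OF K])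
      subgoal by (simp add: \<rho>_def, intro allI impI, rule agree_fst, auto)
      subgoal by (unfold t_def, intro allI impI, rule agree_snd, auto)
      done
    ultimately show ?thesis by simp
  qed
  then show ?thesis by blast
qed

lemma refute_nat:
  assumes "rcc5_struct W R" "w \<in> W" "\<not> sat W R V w \<phi>"
  shows "\<exists>W'::nat set. \<exists>R' V'. rcc5_struct W' R' \<and> (\<exists>w'\<in>W'. \<not> sat W' R' V' w' \<phi>)"
proof -
  obtain \<rho> t where "\<forall>N. approx (gn \<phi> + 1) N \<rho> t" using G1[OF assms] by blast
  then show ?thesis by (rule G2)
qed

lemma notin_RS5: "\<phi> \<notin> RS5_logic TYPE('w) \<longleftrightarrow> (\<exists>W::'w set. \<exists>R V. rcc5_struct W R \<and> (\<exists>w\<in>W. \<not> sat W R V w \<phi>))"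
  unfolding RS5_logic_def valid_frame_def by blast

lemma part1: "RS5_logic TYPE(nat) \<subseteq> RS5_logic TYPE('w)"
proof
  fix \<phi> assume a: "\<phi> \<in> RS5_logic TYPE(nat)"
  show "\<phi> \<in> RS5_logic TYPE('w)"
  proof (rule ccontr)
    assume "\<phi> \<notin> RS5_logic TYPE('w)"
    then obtain W :: "'w set" and R V w where "rcc5_struct W R" "w \<in> W" "\<not> sat W R V w \<phi>"
      unfolding notin_RS5 by blast
    from refute_nat[OF this] have "\<phi> \<notin> RS5_logic TYPE(nat)" unfolding notin_RS5 by blast
    then show False using a by simp
  qed
qed

lemma RS5_iff: "\<phi> \<in> RS5_logic TYPE(nat) \<longleftrightarrow> (\<exists>N. \<forall>\<rho> t. \<not> approx (gn \<phi> + 1) N \<rho> t)"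
proof
  assume a: "\<phi> \<in> RS5_logic TYPE(nat)"
  show "\<exists>N. \<forall>\<rho> t. \<not> approx (gn \<phi> + 1) N \<rho> t"
  proof (rule ccontr)
    assume "\<not> ?thesis"
    then have "\<forall>N. \<exists>\<rho> t. approx (gn \<phi> + 1) N \<rho> t" by blast
    then have "\<exists>\<rho> t. \<forall>N. approx (gn \<phi> + 1) N \<rho> t" by (intro compactness) simp_all
    then obtain \<rho> t where "\<forall>N. approx (gn \<phi> + 1) N \<rho> t" by blast
    then have "\<phi> \<notin> RS5_logic TYPE(nat)" unfolding notin_RS5 by (rule G2)
    then show False using a by simp
  qed
next
  assume "\<exists>N. \<forall>\<rho> t. \<not> approx (gn \<phi> + 1) N \<rho> t"
  then obtain N where N: "\<forall>\<rho> t. \<not> approx (gn \<phi> + 1) N \<rho> t" by blast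
  show "\<phi> \<in> RS5_logic TYPE(nat)"
  proof (rule ccontr)
    assume "\<phi> \<notin> RS5_logic TYPE(nat)"
    then obtain W :: "nat set" and R V w where "rcc5_struct W R" "w \<in> W" "\<not> sat W R V w \<phi>"
      unfolding notin_RS5 by blast
    from G1[OF this] N show False by blast
  qed
qed

definition bitn :: "nat \<Rightarrow> nat \<Rightarrow> bool" where "bitn s x = (s div 2 ^ x mod 2 = 1)"

definition WFc :: "nat \<Rightarrow> nat \<Rightarrow> bool" where
  "WFc s c = ((\<exists>p<c+1. c = pe 0 p) \<or> (\<exists>d<c. c = pe 1 d \<and> bitn s d)
     \<or> (\<exists>d<c. \<exists>e<c. c = pe 2 (pe d e) \<and> bitn s d \<and> bitn s e)
     \<or> (\<exists>r<5. \<exists>d<c. c = pe 3 (pe r d) \<and> bitn s d))"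

definition IsCodeB :: "nat \<Rightarrow> bool" where
  "IsCodeB n = (\<exists>s < 2 ^ (n + 1). bitn s n \<and> (\<forall>c<n+1. bitn s c \<longrightarrow> WFc s c))"

lemma gn_sub_lt:
  "gn \<psi> < gn (Neg \<psi>)" "gn \<psi>1 < gn (Conj \<psi>1 \<psi>2)" "gn \<psi>2 < gn (Conj \<psi>1 \<psi>2)" "gn \<psi> < gn (Box r \<psi>)"
  using pe_gt[of 1 "gn \<psi>"] pe_gt[of 2 "pe (gn \<psi>1) (gn \<psi>2)"] pe_ge[of "gn \<psi>1" "gn \<psi>2"]
    pe_gt[of 3 "pe (rcode r) (gn \<psi>)"] pe_ge[of "rcode r" "gn \<psi>"] by auto

lemma IsCodeB_iff: "IsCodeB n \<longleftrightarrow> (\<exists>\<phi>. gn \<phi> = n)"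
proof
  assume "IsCodeB n"
  then obtain s where s: "bitn s n" "\<forall>c<n+1. bitn s c \<longrightarrow> WFc s c" unfolding IsCodeB_def by blast
  have "c \<le> n \<Longrightarrow> bitn s c \<Longrightarrow> \<exists>\<phi>. gn \<phi> = c" for c
  proof (induction c rule: less_induct)
    case (less c)
    have "WFc s c" using s(2) less.prems by auto
    then consider (a) p where "c = pe 0 p"
      | (n) d where "d < c" "c = pe 1 d" "bitn s d"
      | (c) d e where "d < c" "e < c" "c = pe 2 (pe d e)" "bitn s d" "bitn s e"
      | (b) r d where "r < 5" "d < c" "c = pe 3 (pe r d)" "bitn s d"
      unfolding WFc_def by blast
    then show ?case
    proof cases
      case (a p) then show ?thesis by (metis gn.simps(1))
    next
      case (n d)
      then obtain \<psi> where "gn \<psi> = d" using less.IH[of d] less.prems by auto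
      then show ?thesis using n by (metis gn.simps(2) One_nat_def)
    next
      case (c d e)
      then obtain \<psi>1 \<psi>2 where "gn \<psi>1 = d" "gn \<psi>2 = e" using less.IH[of d] less.IH[of e] less.prems by auto
      then show ?thesis using c by (metis gn.simps(3))
    next
      case (b r d)
      then obtain \<psi> where "gn \<psi> = d" using less.IH[of d] less.prems by auto
      then have "gn (Box (unr r) \<psi>) = c" using b rcode_unr by simp
      then show ?thesis by blast
    qed
  qed
  then show "\<exists>\<phi>. gn \<phi> = n" using s(1) by blast
next
  assume "\<exists>\<phi>. gn \<phi> = n"
  then obtain \<phi> where \<phi>: "gn \<phi> = n" by blast
  define f where "f c = (if \<exists>\<psi>. gn \<psi> = c then 1 else 0::nat)" for c
  have "\<forall>p<n+1. f p < 2" unfolding f_def by simp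
  then obtain s where s: "s < 2 ^ (n + 1)" "\<forall>p<n+1. s div 2 ^ p mod 2 = f p"
    using digits_exist[of 2 "n + 1" f] by auto
  have bit: "bitn s c \<longleftrightarrow> (\<exists>\<psi>. gn \<psi> = c)" if "c < n + 1" for c
    using s(2) that unfolding bitn_def f_def by auto
  have "WFc s c" if cn: "c < n + 1" "bitn s c" for c
  proof -
    obtain \<psi> where \<psi>: "gn \<psi> = c" using bit cn by blast
    show ?thesis
    proof (cases \<psi>)
      case (Atom p)
      then show ?thesis unfolding WFc_def using \<psi> pe_ge[of 0 p] by auto
    next
      case (Neg \<psi>')
      have "gn \<psi>' < c" using gn_sub_lt \<psi> Neg by blast
      then show ?thesis unfolding WFc_def using \<psi> Neg bit cn by fastforce
    next
      case (Conj \<psi>1 \<psi>2)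
      have "gn \<psi>1 < c" "gn \<psi>2 < c" using gn_sub_lt \<psi> Conj by blast+
      then show ?thesis unfolding WFc_def using \<psi> Conj bit cn by fastforce
    next
      case (Box r \<psi>')
      have "gn \<psi>' < c" using gn_sub_lt \<psi> Box by blast
      then show ?thesis unfolding WFc_def using \<psi> Box bit cn rcode_lt5 by fastforce
    qed
  qed
  then show "IsCodeB n" unfolding IsCodeB_def using s(1) bit[of n] \<phi> by auto
qed

definition rhoA :: "nat \<Rightarrow> nat \<Rightarrow> nat \<Rightarrow> nat \<Rightarrow> nat" where
  "rhoA N a x y = a div 8 ^ (x * N + y) mod 8"
definition tA :: "nat \<Rightarrow> nat \<Rightarrow> nat \<Rightarrow> nat \<Rightarrow> nat \<Rightarrow> bool" where
  "tA N K a u c = (a div 8 ^ (N * N + u * K + c) mod 8 \<noteq> 0)"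

lemma approx_code:
  assumes K: "0 < K"
  shows "(\<exists>\<rho> t. approx K N \<rho> t) \<longleftrightarrow> (\<exists>a < 8 ^ (N * N + N * K). approx K N (rhoA N a) (tA N K a))"
proof
  assume "\<exists>\<rho> t. approx K N \<rho> t"
  then obtain \<rho> t where ap: "approx K N \<rho> t" by blast
  define f where "f p = (if p < N * N then \<rho> (p div N) (p mod N)
                          else if t ((p - N * N) div K) ((p - N * N) mod K) then 1 else 0)" for p
  have "f p < 8" if "p < N * N + N * K" for p
  proof (cases "p < N * N")
    case True
    then have "0 < N" by (cases N) auto
    then have "p div N < N" "p mod N < N" using True by (auto simp: div_less_iff_less_mult)
    then have "\<rho> (p div N) (p mod N) \<le> 4" using aD1[OF ap] by blast
    then show ?thesis using True unfolding f_def by simp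
  next
    case False
    then show ?thesis unfolding f_def by simp
  qed
  then obtain a where a: "a < 8 ^ (N * N + N * K)" "\<forall>p < N * N + N * K. a div 8 ^ p mod 8 = f p"
    using digits_exist[of 8 "N * N + N * K" f] by auto
  have "approx K N (rhoA N a) (tA N K a) = approx K N \<rho> t"
  proof (rule approx_cong[OF K], intro allI impI)
    fix x y assume xy: "x < N" "y < N"
    have lt: "x * N + y < N * N"
    proof -
      have "x * N + y < x * N + N" using xy by simp
      also have "\<dots> = (x + 1) * N" by simp
      also have "\<dots> \<le> N * N" using xy by (intro mult_right_mono) auto
      finally show ?thesis .
    qed
    then show "rhoA N a x y = \<rho> x y" unfolding rhoA_def using a(2) xy unfolding f_def by simp
  next
    show "\<forall>u<N. \<forall>c<K. tA N K a u c = t u c"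
    proof (intro allI impI)
      fix u c assume uc: "u < N" "c < K"
      have lt: "u * K + c < N * K"
      proof -
        have "u * K + c < u * K + K" using uc by simp
        also have "\<dots> = (u + 1) * K" by simp
        also have "\<dots> \<le> N * K" using uc by (intro mult_right_mono) auto
        finally show ?thesis .
      qed
      have "(u * K + c) div K = u" "(u * K + c) mod K = c" using uc K by auto
      then show "tA N K a u c = t u c" unfolding tA_def using a(2) lt unfolding f_def
        by (simp add: add.assoc)
    qed
  qed
  then show "\<exists>a < 8 ^ (N * N + N * K). approx K N (rhoA N a) (tA N K a)" using a(1) ap by blast
qed blast

definition "FOr f g = FNot (FAnd (FNot f) (FNot g))"
definition "FImp f g = FNot (FAnd f (FNot g))"
definition "FEx t f = FNot (FAll t (FNot f))"
definition "FIff f g = FAnd (FImp f g) (FImp g f)"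
definition "FLt a b = FLe (TAdd a (C 1)) b"
definition "TPe a b = TAdd (TDiv (TMul (TAdd a b) (TAdd (TAdd a b) (C 1))) (C 2)) a"
definition "TDig a p = TMod (TDiv a (TPow (C 8) p)) (C 8)"
definition "TBit s x = TMod (TDiv s (TPow (C 2) x)) (C 2)"

lemma fv_derived[simp]:
  "fv e (FOr f g) = (fv e f \<or> fv e g)"
  "fv e (FImp f g) = (fv e f \<longrightarrow> fv e g)"
  "fv e (FEx t f) = (\<exists>x < tv e t. fv (x # e) f)"
  "fv e (FIff f g) = (fv e f \<longleftrightarrow> fv e g)"
  "fv e (FLt a b) = (tv e a < tv e b)"
  unfolding FOr_def FImp_def FEx_def FIff_def FLt_def by auto

lemma tv_derived[simp]:
  "tv e (TPe a b) = pe (tv e a) (tv e b)"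
  "tv e (TDig a p) = tv e a div 8 ^ tv e p mod 8"
  "tv e (TBit s x) = tv e s div 2 ^ tv e x mod 2"
  unfolding TPe_def TDig_def TBit_def by (simp_all add: prod_encode_def triangle_def)

definition "bitF s x = FEq (TBit s x) (C 1)"

definition WFF :: fo where
  "WFF = (let s = Vr 2; c = Vr 3 in
    FOr (FEx (TAdd c (C 1)) (FEq c (TPe (C 0) (Vr 4))))
    (FOr (FEx c (FAnd (FEq c (TPe (C 1) (Vr 4))) (bitF s (Vr 4))))
    (FOr (FEx c (FEx c (FAnd (FEq c (TPe (C 2) (TPe (Vr 4) (Vr 5)))) (FAnd (bitF s (Vr 4)) (bitF s (Vr 5))))))
         (FEx (C 5) (FEx c (FAnd (FEq c (TPe (C 3) (TPe (Vr 4) (Vr 5)))) (bitF s (Vr 5))))))))"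

definition IsCodeF :: fo where
  "IsCodeF = (let n = Vr 0 in
    FEx (TPow (C 2) (TAdd n (C 1)))
      (FAnd (bitF (Vr 2) n) (FAll (TAdd n (C 1)) (FImp (bitF (Vr 2) (Vr 3)) WFF))))"

lemma IsCodeF_iff: "fv [N, n] IsCodeF \<longleftrightarrow> IsCodeB n"
  unfolding IsCodeF_def IsCodeB_def WFF_def bitF_def bitn_def WFc_def Let_def by simp

definition rhoF :: "tm \<Rightarrow> tm \<Rightarrow> tm" where
  "rhoF x y = TDig (Vr 2) (TAdd (TMul x (Vr 1)) y)"
definition ttF :: "tm \<Rightarrow> tm \<Rightarrow> fo" where
  "ttF u c = FNot (FEq (TDig (Vr 2) (TAdd (TAdd (TMul (Vr 1) (Vr 1)) (TMul u (TAdd (Vr 0) (C 1)))) c)) (C 0))"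
definition tblF :: "tm \<Rightarrow> tm \<Rightarrow> tm \<Rightarrow> fo" where
  "tblF r s q = FEq (TMod (TDiv (C TABLE) (TPow (C 2) (TAdd (TAdd (TMul (C 25) r) (TMul (C 5) s)) q))) (C 2)) (C 1)"

definition ApproxF :: fo where
  "ApproxF = (let N = Vr 1; K = TAdd (Vr 0) (C 1) in
    FAnd (FAll N (FAll N (FLe (rhoF (Vr 3) (Vr 4)) (C 4))))
   (FAnd (FAll N (FEq (rhoF (Vr 3) (Vr 3)) (C 0)))
   (FAnd (FAll N (FAll N (let x = Vr 3; y = Vr 4 in
       FAnd (FImp (FEq (rhoF x y) (C 0)) (FEq (rhoF y x) (C 0)))
      (FAnd (FImp (FEq (rhoF x y) (C 1)) (FEq (rhoF y x) (C 1)))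
      (FAnd (FImp (FEq (rhoF x y) (C 2)) (FEq (rhoF y x) (C 2)))
      (FAnd (FImp (FEq (rhoF x y) (C 3)) (FEq (rhoF y x) (C 4)))
            (FImp (FEq (rhoF x y) (C 4)) (FEq (rhoF y x) (C 3)))))))))
   (FAnd (FAll N (FAll N (FAll N (tblF (rhoF (Vr 3) (Vr 4)) (rhoF (Vr 4) (Vr 5)) (rhoF (Vr 3) (Vr 5))))))
   (FAnd (FAll N (FAll N (FAll K (FImp (FEq (rhoF (Vr 3) (Vr 4)) (C 0)) (FIff (ttF (Vr 3) (Vr 5)) (ttF (Vr 4) (Vr 5)))))))
   (FAnd (FAll N (FAll K (FAll K (FImp (FEq (Vr 4) (TPe (C 1) (Vr 5))) (FIff (ttF (Vr 3) (Vr 4)) (FNot (ttF (Vr 3) (Vr 5))))))))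
   (FAnd (FAll N (FAll K (FAll K (FAll K (FImp (FEq (Vr 4) (TPe (C 2) (TPe (Vr 5) (Vr 6))))
            (FIff (ttF (Vr 3) (Vr 4)) (FAnd (ttF (Vr 3) (Vr 5)) (ttF (Vr 3) (Vr 6)))))))))
   (FAnd (FAll N (FAll N (FAll K (FAll (C 5) (FAll K
            (FImp (FEq (Vr 5) (TPe (C 3) (TPe (Vr 6) (Vr 7))))
              (FImp (ttF (Vr 3) (Vr 5)) (FImp (FEq (rhoF (Vr 3) (Vr 4)) (Vr 6)) (ttF (Vr 4) (Vr 7))))))))))
   (FAnd (FAll N (FAll K (FAll (C 5) (FAll K
            (let w = TAdd (TPe (Vr 3) (Vr 4)) (C 1) in
             FImp (FEq (Vr 4) (TPe (C 3) (TPe (Vr 5) (Vr 6))))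
              (FImp (FNot (ttF (Vr 3) (Vr 4))) (FImp (FLt w N)
                 (FAnd (FEq (rhoF (Vr 3) w) (Vr 5)) (FNot (ttF w (Vr 6)))))))))))
         (FImp (FLt (C 0) N) (FNot (ttF (C 0) (Vr 0)))))))))))))"

lemma ApproxF_iff: "fv [a, N, n] ApproxF \<longleftrightarrow> approx (n + 1) N (rhoA N a) (tA N (n + 1) a)"
  unfolding ApproxF_def approx_def rhoF_def ttF_def tblF_def tbl_def rhoA_def tA_def Let_def by simp

definition PhiF :: fo where
  "PhiF = FAnd IsCodeF (FAll (TPow (C 8) (TAdd (TMul (Vr 1) (Vr 1)) (TMul (Vr 1) (TAdd (Vr 0) (C 1))))) (FNot ApproxF))"

lemma PhiF_iff: "fv [N, n] PhiF \<longleftrightarrow> IsCodeB n \<and> (\<forall>a < 8 ^ (N * N + N * (n + 1)). \<not> approx (n + 1) N (rhoA N a) (tA N (n + 1) a))"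
  unfolding PhiF_def by (simp add: IsCodeF_iff ApproxF_iff)

theorem r_enum_RS5: "r_enum (gn ` RS5_logic TYPE(nat))"
proof (rule r_enum_fo[where P = PhiF])
  fix n
  have eq: "(\<forall>a < 8 ^ (N * N + N * (n + 1)). \<not> approx (n + 1) N (rhoA N a) (tA N (n + 1) a))
      \<longleftrightarrow> (\<forall>\<rho> t. \<not> approx (n + 1) N \<rho> t)" for N
    using approx_code[of "n + 1" N] by auto
  show "n \<in> gn ` RS5_logic TYPE(nat) \<longleftrightarrow> (\<exists>N. fv [N, n] PhiF)"
    unfolding PhiF_iff eq
  proof
    assume "n \<in> gn ` RS5_logic TYPE(nat)"
    then obtain \<phi> where "\<phi> \<in> RS5_logic TYPE(nat)" "n = gn \<phi>" by blast
    then show "\<exists>N. IsCodeB n \<and> (\<forall>\<rho> t. \<not> approx (n + 1) N \<rho> t)"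
      using RS5_iff[of \<phi>] IsCodeB_iff by blast
  next
    assume "\<exists>N. IsCodeB n \<and> (\<forall>\<rho> t. \<not> approx (n + 1) N \<rho> t)"
    then obtain N where "IsCodeB n" "\<forall>\<rho> t. \<not> approx (n + 1) N \<rho> t" by blast
    moreover obtain \<phi> where "gn \<phi> = n" using \<open>IsCodeB n\<close> IsCodeB_iff by blast
    ultimately have "\<phi> \<in> RS5_logic TYPE(nat)" using RS5_iff[of \<phi>] by blast
    then show "n \<in> gn ` RS5_logic TYPE(nat)" using \<open>gn \<phi> = n\<close> by blast
  qed
qed

lemma Treg_int_ne: "s \<in> T_reg T \<Longrightarrow> T interior_of s \<noteq> {}"
  unfolding T_reg_def reg_closed_def using closure_of_empty by fastforce

lemma top_rel_uniq:
  assumes "T interior_of s \<noteq> {}" "T interior_of t \<noteq> {}" "top_rel T r s t" "top_rel T r' s t"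
  shows "r = r'"
  using assms interior_of_mono[of s t T] interior_of_mono[of t s T]
  by (cases r; cases r') (auto simp: top_rel_def)

lemma top_rel_ex:
  assumes "T interior_of s \<noteq> {}" "T interior_of t \<noteq> {}"
  shows "\<exists>r. top_rel T r s t"
proof -
  consider "s = t" | "s \<subseteq> t" "s \<noteq> t" | "t \<subseteq> s" "s \<noteq> t" | "\<not> s \<subseteq> t" "\<not> t \<subseteq> s" by blast
  then show ?thesis
  proof cases
    case 1 then show ?thesis by (intro exI[of _ EQ]) (simp add: top_rel_def)
  next
    case 2 then show ?thesis by (intro exI[of _ PP]) (simp add: top_rel_def)
  next
    case 3 then show ?thesis by (intro exI[of _ PPI]) (auto simp: top_rel_def)
  next
    case 4 then show ?thesis
    proof (cases "T interior_of s \<inter> T interior_of t = {}")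
      case True then show ?thesis by (intro exI[of _ DR]) (simp add: top_rel_def)
    next
      case False then show ?thesis using 4 by (intro exI[of _ PO]) (simp add: top_rel_def)
    qed
  qed
qed

definition "trd T r x y = (case r of
      EQ \<Rightarrow> x = y
    | PO \<Rightarrow> (T interior_of x) \<inter> (T interior_of y) \<noteq> {} \<and> \<not> x \<subseteq> y \<and> \<not> y \<subseteq> x
    | DR \<Rightarrow> (T interior_of x) \<inter> (T interior_of y) = {}
    | PP \<Rightarrow> x \<subseteq> y \<and> x \<noteq> y \<and> T interior_of x \<subseteq> T interior_of y
    | PPI \<Rightarrow> y \<subseteq> x \<and> x \<noteq> y \<and> T interior_of y \<subseteq> T interior_of x)"

lemma top_rel_trd: "top_rel T r x y \<Longrightarrow> trd T r x y"
  by (cases r) (simp_all add: top_rel_def trd_def interior_of_mono)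

lemma trd_comp:
  assumes "r \<noteq> EQ" "s \<noteq> EQ" "T interior_of x \<noteq> {}" "T interior_of y \<noteq> {}" "T interior_of z \<noteq> {}"
    "trd T r x y" "trd T s y z" "trd T q x z"
  shows "q \<in> comp5 r s"
  using assms by (cases r; cases s; cases q; auto simp: trd_def)

lemma top_comp:
  assumes ne: "T interior_of x \<noteq> {}" "T interior_of y \<noteq> {}" "T interior_of z \<noteq> {}"
    and r: "top_rel T r x y" and s: "top_rel T s y z" and q: "top_rel T q x z"
  shows "q \<in> comp5 r s"
proof (cases "r = EQ")
  case True
  then have "x = y" using r by (simp add: top_rel_def)
  then have "top_rel T q y z" using q by simp
  then have "q = s" using top_rel_uniq[OF ne(2,3) _ s] by simp
  then show ?thesis using True by simp
next
  case rE: False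
  show ?thesis
  proof (cases "s = EQ")
    case True
    then have "y = z" using s by (simp add: top_rel_def)
    then have "top_rel T q x y" using q by simp
    then have "q = r" using top_rel_uniq[OF ne(1,2) _ r] by simp
    then show ?thesis using True by simp
  next
    case False
    show ?thesis by (rule trd_comp[OF rE False ne top_rel_trd[OF r] top_rel_trd[OF s] top_rel_trd[OF q]])
  qed
qed

lemma top_struct:
  assumes "W \<noteq> {}" "W \<subseteq> T_reg T"
  shows "rcc5_struct W (top_rel T)"
  unfolding rcc5_struct_def
proof (intro conjI ballI allI impI)
  show "W \<noteq> {}" by fact
next
  fix x y assume xy: "x \<in> W" "y \<in> W"
  then have ne: "T interior_of x \<noteq> {}" "T interior_of y \<noteq> {}" using assms(2) Treg_int_ne by auto
  show "\<exists>!r. top_rel T r x y" using top_rel_ex[OF ne] top_rel_uniq[OF ne] by blast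
  show "top_rel T EQ x y \<longleftrightarrow> x = y" by (simp add: top_rel_def)
  show "top_rel T PO x y \<longleftrightarrow> top_rel T PO y x" by (auto simp: top_rel_def)
  show "top_rel T DR x y \<longleftrightarrow> top_rel T DR y x" by (auto simp: top_rel_def)
  show "top_rel T PP x y \<longleftrightarrow> top_rel T PPI y x" by (auto simp: top_rel_def)
next
  fix x y z r s assume xyz: "x \<in> W" "y \<in> W" "z \<in> W" and rs: "top_rel T r x y" "top_rel T s y z"
  then have ne: "T interior_of x \<noteq> {}" "T interior_of y \<noteq> {}" "T interior_of z \<noteq> {}"
    using assms(2) Treg_int_ne by auto
  obtain q where "top_rel T q x z" using top_rel_ex[OF ne(1,3)] by blast
  then show "\<exists>q\<in>comp5 r s. top_rel T q x z" using top_comp[OF ne rs] by blast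
qed

lemma part2: "RS5_logic TYPE(nat) \<subseteq> TOP_logic TYPE('a)"
proof
  fix \<phi> assume "\<phi> \<in> RS5_logic TYPE(nat)"
  then have a: "\<phi> \<in> RS5_logic TYPE('a set)" using part1 by blast
  show "\<phi> \<in> TOP_logic TYPE('a)"
    unfolding TOP_logic_def
  proof (intro CollectI allI impI)
    fix T :: "'a topology" and W assume "W \<noteq> {} \<and> W \<subseteq> T_reg T"
    then have "rcc5_struct W (top_rel T)" using top_struct by blast
    then show "valid_frame W (top_rel T) \<phi>" using a unfolding RS5_logic_def by blast
  qed
qed

lemma part3a: "RS5_logic TYPE(nat) \<subseteq> Rn_logic TYPE('n::finite)"
proof
  fix \<phi> assume "\<phi> \<in> RS5_logic TYPE(nat)"
  then have a: "\<phi> \<in> RS5_logic TYPE((real^'n) set)" using part1 by blast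
  show "\<phi> \<in> Rn_logic TYPE('n)"
    unfolding Rn_logic_def
  proof (intro CollectI allI impI)
    fix W :: "(real^'n) set set" assume "W \<noteq> {} \<and> W \<subseteq> T_reg euclidean"
    then have "rcc5_struct W (top_rel euclidean)" using top_struct by blast
    then show "valid_frame W (top_rel euclidean) \<phi>" using a unfolding RS5_logic_def by blast
  qed
qed

context
  fixes W :: "nat set" and R :: "rel5 \<Rightarrow> nat \<Rightarrow> nat \<Rightarrow> bool"
  assumes st: "rcc5_struct W R"
begin

definition "le x y \<longleftrightarrow> x = y \<or> R PP x y"

definition "Sx x = {pe a b | a b. a \<in> W \<and> b \<in> W \<and> \<not> R DR a b \<and> (le a x \<or> le b x)}"

lemma R_uniq: "x \<in> W \<Longrightarrow> y \<in> W \<Longrightarrow> R r x y \<Longrightarrow> R r' x y \<Longrightarrow> r = r'"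
  using rs_uniq[OF st] by blast

lemma R_refl: "x \<in> W \<Longrightarrow> R EQ x x"
  using rs_eq[OF st] by blast

lemma le_PP: "a \<in> W \<Longrightarrow> x \<in> W \<Longrightarrow> y \<in> W \<Longrightarrow> le a x \<Longrightarrow> R PP x y \<Longrightarrow> R PP a y"
  unfolding le_def using rs_comp[OF st, of a x y PP PP] by auto

lemma le_DR: "a \<in> W \<Longrightarrow> x \<in> W \<Longrightarrow> y \<in> W \<Longrightarrow> le a x \<Longrightarrow> R DR x y \<Longrightarrow> R DR a y"
  unfolding le_def using rs_comp[OF st, of a x y PP DR] by auto

lemma DR_le: "a \<in> W \<Longrightarrow> y \<in> W \<Longrightarrow> R DR a y \<Longrightarrow> le a y \<Longrightarrow> False"
  unfolding le_def using R_uniq R_refl by fastforce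

lemma DR_sym: "a \<in> W \<Longrightarrow> b \<in> W \<Longrightarrow> R DR a b \<Longrightarrow> R DR b a"
  using rs_dr[OF st] by blast

lemma Sx_ne: "x \<in> W \<Longrightarrow> pe x x \<in> Sx x"
  unfolding Sx_def le_def using R_uniq R_refl by fastforce

lemma Sx_mem: "c \<in> Sx x \<longleftrightarrow> (\<exists>a b. c = pe a b \<and> a \<in> W \<and> b \<in> W \<and> \<not> R DR a b \<and> (le a x \<or> le b x))"
  unfolding Sx_def by blast

lemma Sx_PP:
  assumes "x \<in> W" "y \<in> W" "R PP x y"
  shows "Sx x \<subseteq> Sx y" "Sx x \<noteq> Sx y"
proof -
  show "Sx x \<subseteq> Sx y"
  proof
    fix c assume "c \<in> Sx x"
    then obtain a b where c: "c = pe a b" "a \<in> W" "b \<in> W" "\<not> R DR a b" "le a x \<or> le b x"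
      unfolding Sx_mem by blast
    then have "le a y \<or> le b y" using le_PP[OF _ assms(1,2) _ assms(3)] unfolding le_def by blast
    then show "c \<in> Sx y" using c unfolding Sx_mem by blast
  qed
  have "pe y y \<in> Sx y" by (rule Sx_ne[OF assms(2)])
  moreover have "pe y y \<notin> Sx x"
  proof
    assume "pe y y \<in> Sx x"
    then have "le y x" unfolding Sx_mem by (auto simp: prod_encode_eq)
    then show False unfolding le_def
    proof
      assume "y = x"
      then show False using assms R_uniq[of x x PP EQ] R_refl[of x] by simp
    next
      assume "R PP y x"
      then have "R PPI x y" using rs_pp[OF st, of y x] assms by simp
      then show False using assms R_uniq[of x y PP PPI] by simp
    qed
  qed
  ultimately show "Sx x \<noteq> Sx y" by blast
qed

lemma Sx_DR:
  assumes "x \<in> W" "y \<in> W" "R DR x y"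
  shows "Sx x \<inter> Sx y = {}"
proof (rule ccontr)
  assume "Sx x \<inter> Sx y \<noteq> {}"
  then obtain c where "c \<in> Sx x" "c \<in> Sx y" by blast
  then obtain a b where ab: "a \<in> W" "b \<in> W" "\<not> R DR a b" "le a x \<or> le b x" "le a y \<or> le b y"
    unfolding Sx_mem by (auto simp: prod_encode_eq)
  have dyx: "R DR y x" using DR_sym assms by blast
  show False
  proof (cases "le a x")
    case True
    then have "R DR a y" using le_DR[OF ab(1) assms(1,2) _ assms(3)] by blast
    then have day: "R DR a y" .
    show False
    proof (cases "le a y")
      case True then show ?thesis using DR_le[OF ab(1) assms(2) day] by blast
    next
      case False then have "le b y" using ab(5) by blast
      have "R DR y a" using DR_sym[OF ab(1) assms(2) day] .
      then have "R DR b a" using le_DR[OF ab(2) assms(2) ab(1) \<open>le b y\<close>] by blast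
      then show ?thesis using DR_sym[OF ab(2) ab(1)] ab(3) by blast
    qed
  next
    case False
    then have bx: "le b x" using ab by blast
    then have "R DR b y" using le_DR[OF ab(2) assms(1,2) _ assms(3)] by blast
    then have dby: "R DR b y" .
    show False
    proof (cases "le b y")
      case True then show ?thesis using DR_le[OF ab(2) assms(2) dby] by blast
    next
      case False then have "le a y" using ab(5) by blast
      have "R DR y b" using DR_sym[OF ab(2) assms(2) dby] .
      then have "R DR a b" using le_DR[OF ab(1) assms(2) ab(2) \<open>le a y\<close>] by blast
      then show ?thesis using ab(3) by blast
    qed
  qed
qed

lemma Sx_PO:
  assumes "x \<in> W" "y \<in> W" "R PO x y"
  shows "Sx x \<inter> Sx y \<noteq> {}" "\<not> Sx x \<subseteq> Sx y" "\<not> Sx y \<subseteq> Sx x"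
proof -
  have nd: "\<not> R DR x y" using R_uniq assms by blast
  have "pe x y \<in> Sx x" "pe x y \<in> Sx y" unfolding Sx_mem le_def using assms nd by blast+
  then show "Sx x \<inter> Sx y \<noteq> {}" by blast
  have nxy: "\<not> le x y" unfolding le_def
  proof
    assume "x = y \<or> R PP x y"
    then show False
    proof
      assume "x = y" then show False using assms R_uniq[of x x PO EQ] R_refl[of x] by simp
    next
      assume "R PP x y" then show False using assms R_uniq[of x y PO PP] by simp
    qed
  qed
  have pyx: "R PO y x" using rs_po[OF st, of x y] assms by simp
  have nyx: "\<not> le y x" unfolding le_def
  proof
    assume "y = x \<or> R PP y x"
    then show False
    proof
      assume "y = x" then show False using assms R_uniq[of x x PO EQ] R_refl[of x] by simp
    next
      assume "R PP y x" then show False using assms pyx R_uniq[of y x PO PP] by simp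
    qed
  qed
  have "pe x x \<notin> Sx y" using nxy unfolding Sx_mem by (auto simp: prod_encode_eq)
  then show "\<not> Sx x \<subseteq> Sx y" using Sx_ne[OF assms(1)] by blast
  have "pe y y \<notin> Sx x" using nyx unfolding Sx_mem by (auto simp: prod_encode_eq)
  then show "\<not> Sx y \<subseteq> Sx x" using Sx_ne[OF assms(2)] by blast
qed

end

definition slab :: "nat \<Rightarrow> (real^'n) set" where
  "slab k = {z. 2 * real k < z $ undefined \<and> z $ undefined < 2 * real k + 1}"

definition Ob :: "nat set \<Rightarrow> (real^'n) set" where
  "Ob S = (\<Union>k\<in>S. slab k)"

definition reg :: "nat set \<Rightarrow> (real^'n) set" where
  "reg S = closure (Ob S)"

lemma open_slab: "open (slab k :: (real^'n) set)"
proof -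
  have "slab k = {z::real^'n. 2 * real k < z $ undefined} \<inter> {z. z $ undefined < 2 * real k + 1}"
    unfolding slab_def by auto
  then show ?thesis by (simp add: open_Int open_halfspace_component_gt_cart open_halfspace_component_lt_cart)
qed

lemma open_Ob: "open (Ob S :: (real^'n) set)"
  unfolding Ob_def by (intro open_UN ballI open_slab)

definition pt :: "nat \<Rightarrow> real^'n" where "pt k = (\<chi> j. 2 * real k + 1/2)"

lemma pt_slab: "(pt k :: real^'n) \<in> slab k"
  unfolding pt_def slab_def by simp

lemma slab_disj: assumes "k \<noteq> j" shows "(slab k :: (real^'n) set) \<inter> slab j = {}"
proof (rule ccontr)
  assume "\<not> ?thesis"
  then obtain z :: "real^'n" where z: "z \<in> slab k" "z \<in> slab j" by blast
  show False
  proof (cases "k < j")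
    case True
    then have "real k + 1 \<le> real j" by simp
    then show False using z unfolding slab_def by simp
  next
    case False
    then have "real j + 1 \<le> real k" using \<open>k \<noteq> j\<close> by simp
    then show False using z unfolding slab_def by simp
  qed
qed

lemma slab_Ob_disj: "k \<notin> S' \<Longrightarrow> slab k \<inter> Ob S' = ({} :: (real^'n) set)"
proof (rule ccontr)
  assume "k \<notin> S'" "slab k \<inter> Ob S' \<noteq> ({} :: (real^'n) set)"
  then obtain z :: "real^'n" and j where "z \<in> slab k" "j \<in> S'" "z \<in> slab j" unfolding Ob_def by blast
  moreover have "k \<noteq> j" using \<open>k \<notin> S'\<close> \<open>j \<in> S'\<close> by blast
  ultimately show False using slab_disj[of k j] by blast
qed

lemma Ob_disj: "S \<inter> S' = {} \<Longrightarrow> Ob S \<inter> Ob S' = ({} :: (real^'n) set)"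
proof (rule ccontr)
  assume "S \<inter> S' = {}" "Ob S \<inter> Ob S' \<noteq> ({} :: (real^'n) set)"
  then obtain z :: "real^'n" and k where "k \<in> S" "z \<in> slab k" "z \<in> Ob S'" unfolding Ob_def by blast
  moreover have "k \<notin> S'" using \<open>S \<inter> S' = {}\<close> \<open>k \<in> S\<close> by blast
  ultimately show False using slab_Ob_disj[of k S'] by blast
qed

lemma reg_closed_reg: "reg_closed euclidean (reg S :: (real^'n) set)"
proof -
  let ?U = "Ob S :: (real^'n) set"
  have "closure (interior (closure ?U)) = closure ?U"
  proof
    show "closure (interior (closure ?U)) \<subseteq> closure ?U"
      using closure_mono[OF interior_subset[of "closure ?U"]] by simp
    have "?U \<subseteq> interior (closure ?U)"
      by (rule interior_maximal[OF closure_subset open_Ob])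
    then show "closure ?U \<subseteq> closure (interior (closure ?U))" by (rule closure_mono)
  qed
  then show ?thesis unfolding reg_closed_def reg_def euclidean_closure_of euclidean_interior_of .
qed

lemma pt_reg: "k \<in> S \<Longrightarrow> (pt k :: real^'n) \<in> reg S"
  unfolding reg_def Ob_def using pt_slab closure_subset by fastforce

lemma reg_ne: "S \<noteq> {} \<Longrightarrow> (reg S :: (real^'n) set) \<noteq> {}"
  using pt_reg by blast

lemma reg_subset: "(reg S :: (real^'n) set) \<subseteq> reg S' \<longleftrightarrow> S \<subseteq> S'" (is "?L \<longleftrightarrow> ?R")
proof
  assume sub: ?L
  show "S \<subseteq> S'"
  proof
    fix k assume "k \<in> S"
    show "k \<in> S'"
    proof (rule ccontr)
      assume "k \<notin> S'"
      then have "slab k \<inter> Ob S' = ({} :: (real^'n) set)" by (rule slab_Ob_disj)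
      then have "slab k \<inter> closure (Ob S') = ({} :: (real^'n) set)" using open_Int_closure_eq_empty[OF open_slab] by blast
      moreover have "(pt k :: real^'n) \<in> reg S'" using sub pt_reg[OF \<open>k \<in> S\<close>] by blast
      ultimately show False using pt_slab[of k, where 'n='n] unfolding reg_def by blast
    qed
  qed
next
  assume ?R
  then show ?L unfolding reg_def Ob_def by (intro closure_mono) blast
qed

lemma reg_eq: "(reg S :: (real^'n) set) = reg S' \<longleftrightarrow> S = S'"
  using reg_subset[of S S'] reg_subset[of S' S] by blast

lemma int_reg_disj: "interior (reg S) \<inter> interior (reg S') = ({} :: (real^'n) set) \<longleftrightarrow> S \<inter> S' = {}"
proof
  assume "S \<inter> S' = {}"
  then have d: "Ob S \<inter> Ob S' = ({} :: (real^'n) set)" by (rule Ob_disj)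
  let ?I = "interior (reg S) :: (real^'n) set"
  have "?I \<inter> Ob S' = {}"
  proof (rule ccontr)
    assume "?I \<inter> Ob S' \<noteq> {}"
    moreover have "open (?I \<inter> Ob S')" by (intro open_Int open_interior open_Ob)
    moreover have "?I \<inter> Ob S' \<subseteq> closure (Ob S)" using interior_subset unfolding reg_def by blast
    ultimately have "(?I \<inter> Ob S') \<inter> Ob S \<noteq> {}"
      using open_Int_closure_eq_empty[of "?I \<inter> Ob S'" "Ob S"] by blast
    then show False using d by blast
  qed
  then have "?I \<inter> closure (Ob S') = {}" using open_Int_closure_eq_empty[OF open_interior] by blast
  then show "interior (reg S) \<inter> interior (reg S') = ({} :: (real^'n) set)"
    unfolding reg_def using interior_subset[of "closure (Ob S')"] by blast
next
  assume a: "interior (reg S) \<inter> interior (reg S') = ({} :: (real^'n) set)"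
  show "S \<inter> S' = {}"
  proof (rule ccontr)
    assume "S \<inter> S' \<noteq> {}"
    then obtain k where k: "k \<in> S" "k \<in> S'" by blast
    have "slab k \<subseteq> (reg S :: (real^'n) set)" "slab k \<subseteq> (reg S' :: (real^'n) set)"
      unfolding reg_def Ob_def using k closure_subset by fastforce+
    then have "slab k \<subseteq> interior (reg S :: (real^'n) set)" "slab k \<subseteq> interior (reg S' :: (real^'n) set)"
      using interior_maximal open_slab by blast+
    then show False using a pt_slab[of k, where 'n='n] by blast
  qed
qed

definition srel :: "rel5 \<Rightarrow> nat set \<Rightarrow> nat set \<Rightarrow> bool" where
  "srel r A B = (case r of EQ \<Rightarrow> A = B | PO \<Rightarrow> A \<inter> B \<noteq> {} \<and> \<not> A \<subseteq> B \<and> \<not> B \<subseteq> A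
     | DR \<Rightarrow> A \<inter> B = {} | PP \<Rightarrow> A \<subseteq> B \<and> A \<noteq> B | PPI \<Rightarrow> B \<subseteq> A \<and> A \<noteq> B)"

lemma top_reg_srel:
  "top_rel euclidean r (reg A :: (real^'n) set) (reg B) \<longleftrightarrow> srel r A B"
  unfolding top_rel_def srel_def euclidean_interior_of
  by (cases r) (simp_all add: reg_subset reg_eq int_reg_disj)

lemma srel_uniq: "A \<noteq> {} \<Longrightarrow> B \<noteq> {} \<Longrightarrow> srel r A B \<Longrightarrow> srel r' A B \<Longrightarrow> r = r'"
  by (cases r; cases r') (auto simp: srel_def)

lemma R_srel:
  assumes st: "rcc5_struct W R" and xy: "x \<in> W" "y \<in> W" "R r x y"
  shows "srel r (Sx W R x) (Sx W R y)"
proof (cases r)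
  case EQ then show ?thesis using xy rs_eq[OF st] by (simp add: srel_def)
next
  case PO then show ?thesis using Sx_PO[OF st xy(1,2)] xy(3) by (simp add: srel_def)
next
  case DR then show ?thesis using Sx_DR[OF st xy(1,2)] xy(3) by (simp add: srel_def)
next
  case PP then show ?thesis using Sx_PP[OF st xy(1,2)] xy(3) by (simp add: srel_def)
next
  case PPI
  then have "R PP y x" using rs_pp[OF st xy(2,1)] xy(3) by simp
  then show ?thesis using Sx_PP[OF st xy(2,1)] PPI by (simp add: srel_def)
qed

lemma rep_rel:
  assumes st: "rcc5_struct W R" and xy: "x \<in> W" "y \<in> W"
  shows "top_rel euclidean r (reg (Sx W R x) :: (real^'n) set) (reg (Sx W R y)) \<longleftrightarrow> R r x y"
proof -
  obtain r0 where r0: "R r0 x y" using rs_uniq[OF st xy] by blast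
  have s0: "srel r0 (Sx W R x) (Sx W R y)" by (rule R_srel[OF st xy r0])
  have ne: "Sx W R x \<noteq> {}" "Sx W R y \<noteq> {}" using Sx_ne[OF st xy(1)] Sx_ne[OF st xy(2)] by blast+
  have "top_rel euclidean r (reg (Sx W R x) :: (real^'n) set) (reg (Sx W R y)) \<longleftrightarrow> r = r0"
    unfolding top_reg_srel using srel_uniq[OF ne _ s0] s0 by blast
  also have "\<dots> \<longleftrightarrow> R r x y" using R_uniq[OF st xy _ r0] r0 by blast
  finally show ?thesis .
qed

lemma sat_iso:
  assumes inj: "inj_on h W" and rel: "\<And>x y r. x \<in> W \<Longrightarrow> y \<in> W \<Longrightarrow> R' r (h x) (h y) \<longleftrightarrow> R r x y"
  shows "x \<in> W \<Longrightarrow> sat (h ` W) R' (\<lambda>p. h ` (V p \<inter> W)) (h x) \<psi> \<longleftrightarrow> sat W R V x \<psi>"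
proof (induction \<psi> arbitrary: x)
  case (Atom p)
  then show ?case using inj by (auto simp: inj_on_image_mem_iff)
next
  case (Box r \<psi>)
  then show ?case using rel by auto
qed auto

lemma part3b: "Rn_logic TYPE('n::finite) \<subseteq> RS5_logic TYPE(nat)"
proof
  fix \<phi> assume a: "\<phi> \<in> Rn_logic TYPE('n)"
  show "\<phi> \<in> RS5_logic TYPE(nat)"
    unfolding RS5_logic_def
  proof (intro CollectI allI impI)
    fix W :: "nat set" and R assume st: "rcc5_struct W R"
    define h where "h x = (reg (Sx W R x) :: (real^'n) set)" for x
    have rel: "top_rel euclidean r (h x) (h y) \<longleftrightarrow> R r x y" if "x \<in> W" "y \<in> W" for x y r
      unfolding h_def by (rule rep_rel[OF st that])
    have inj: "inj_on h W"
    proof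
      fix x y assume "x \<in> W" "y \<in> W" "h x = h y"
      then have "top_rel euclidean EQ (h x) (h y)" by (simp add: top_rel_def)
      then show "x = y" using rel[OF \<open>x \<in> W\<close> \<open>y \<in> W\<close>] rs_eq[OF st \<open>x \<in> W\<close> \<open>y \<in> W\<close>] by simp
    qed
    have ne: "h ` W \<noteq> {}" using rs_ne[OF st] by simp
    have sub: "h ` W \<subseteq> T_reg euclidean"
    proof
      fix s assume "s \<in> h ` W"
      then obtain x where x: "x \<in> W" "s = h x" by blast
      have "Sx W R x \<noteq> {}" using Sx_ne[OF st x(1)] by blast
      then show "s \<in> T_reg euclidean" unfolding T_reg_def h_def x(2)
        using reg_ne reg_closed_reg by blast
    qed
    have all: "\<forall>W :: (real^'n) set set. W \<noteq> {} \<and> W \<subseteq> T_reg euclidean \<longrightarrow> valid_frame W (top_rel euclidean) \<phi>"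
      using a unfolding Rn_logic_def by simp
    have vf: "valid_frame (h ` W) (top_rel euclidean) \<phi>"
      using all[rule_format, of "h ` W"] ne sub by simp
    show "valid_frame W R \<phi>"
      unfolding valid_frame_def
    proof (intro allI ballI)
      fix V x assume "x \<in> W"
      have "sat (h ` W) (top_rel euclidean) (\<lambda>p. h ` (V p \<inter> W)) (h x) \<phi>"
        using vf \<open>x \<in> W\<close> unfolding valid_frame_def by blast
      then show "sat W R V x \<phi>" using sat_iso[of h W "top_rel euclidean" R, OF inj rel \<open>x \<in> W\<close>] by blast
    qed
  qed
qed

theorem part3: "Rn_logic TYPE('n::finite) = RS5_logic TYPE(nat)"
  using part3a part3b by blast

theorem theorem8p6:
  shows "RS5_logic TYPE(nat) \<subseteq> RS5_logic TYPE('w)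
       \<and> RS5_logic TYPE(nat) \<subseteq> TOP_logic TYPE('a)
       \<and> Rn_logic TYPE('n::finite) = RS5_logic TYPE(nat)
       \<and> r_enum (gn ` RS5_logic TYPE(nat))"
  using part1 part2 part3 r_enum_RS5 by blast

end
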